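(* For any $A\subseteq\mathbb{N}$ there exists an irreflexive interpolable relation $\prec_A$ on $\mathbb{N}$ such that for any $X\subseteq\mathbb{N}$: $A\leq_T X'$ if and only if there exists an $X$-computable relation on $\mathbb{N}$ isomorphic to $\prec_A$.
   Context: A relation $\prec$ is irreflexive if $x\prec x$ fails for all $x$. A transitive relation $\prec$ on $\mathbb{N}$ is interpolable if each initial segment $\{x\mid x\prec y\}$ is directed (non-empty, and any two of its elements have a $\prec$-upper bound in it). $X'$ denotes the Turing jump of $X$. *)

theory Defs
  imports Main "HOL-Library.Nat_Bijection"
begin

text \<open>Unary partial recursive functions on nat (tuples coded via the Cantor pairing
  prod_encode), with an oracle call.  This is a standard Kleene-style basis.\<close>

datatype recf =
    Z | S | Id | Fst | Snd | Orc
  | Comp recf recf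
  | Pair recf recf
  | PrimRec recf recf
  | Mu recf

inductive eval :: "nat set \<Rightarrow> recf \<Rightarrow> nat \<Rightarrow> nat \<Rightarrow> bool" for X :: "nat set" where
  eval_Z: "eval X Z x 0"
| eval_S: "eval X S x (Suc x)"
| eval_Id: "eval X Id x x"
| eval_Fst: "eval X Fst x (fst (prod_decode x))"
| eval_Snd: "eval X Snd x (snd (prod_decode x))"
| eval_Orc: "eval X Orc x (if x \<in> X then 1 else 0)"
| eval_Comp: "eval X g x y \<Longrightarrow> eval X f y z \<Longrightarrow> eval X (Comp f g) x z"
| eval_Pair: "eval X f x y \<Longrightarrow> eval X g x z \<Longrightarrow> eval X (Pair f g) x (prod_encode (y, z))"
| eval_PrimRec0: "eval X f a y \<Longrightarrow> eval X (PrimRec f g) (prod_encode (a, 0)) y"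
| eval_PrimRecS: "eval X (PrimRec f g) (prod_encode (a, n)) y \<Longrightarrow>
     eval X g (prod_encode (a, prod_encode (n, y))) z \<Longrightarrow>
     eval X (PrimRec f g) (prod_encode (a, Suc n)) z"
| eval_Mu: "eval X f (prod_encode (a, n)) 0 \<Longrightarrow>
     (\<forall>m<n. \<exists>v. v \<noteq> 0 \<and> eval X f (prod_encode (a, m)) v) \<Longrightarrow>
     eval X (Mu f) a n"

fun code :: "recf \<Rightarrow> nat" where
  "code Z = prod_encode (0, 0)"
| "code S = prod_encode (1, 0)"
| "code Id = prod_encode (2, 0)"
| "code Fst = prod_encode (3, 0)"
| "code Snd = prod_encode (4, 0)"
| "code Orc = prod_encode (5, 0)"
| "code (Comp f g) = prod_encode (6, prod_encode (code f, code g))"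
| "code (Pair f g) = prod_encode (7, prod_encode (code f, code g))"
| "code (PrimRec f g) = prod_encode (8, prod_encode (code f, code g))"
| "code (Mu f) = prod_encode (9, code f)"

definition jump :: "nat set \<Rightarrow> nat set" where
  "jump X = {e. \<exists>p y. code p = e \<and> eval X p e y}"

definition turing_reducible :: "nat set \<Rightarrow> nat set \<Rightarrow> bool" where
  "turing_reducible A Y \<longleftrightarrow> (\<exists>p. \<forall>x. eval Y p x (if x \<in> A then 1 else 0))"

definition rel_computable_in :: "nat set \<Rightarrow> (nat \<Rightarrow> nat \<Rightarrow> bool) \<Rightarrow> bool" where
  "rel_computable_in X R \<longleftrightarrow>
     (\<exists>p. \<forall>x y. eval X p (prod_encode (x, y)) (if R x y then 1 else 0))"

definition rel_isomorphic :: "(nat \<Rightarrow> nat \<Rightarrow> bool) \<Rightarrow> (nat \<Rightarrow> nat \<Rightarrow> bool) \<Rightarrow> bool" where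
  "rel_isomorphic R Q \<longleftrightarrow> (\<exists>f. bij f \<and> (\<forall>x y. R x y \<longleftrightarrow> Q (f x) (f y)))"

definition irreflexive_rel :: "(nat \<Rightarrow> nat \<Rightarrow> bool) \<Rightarrow> bool" where
  "irreflexive_rel R \<longleftrightarrow> (\<forall>x. \<not> R x x)"

definition transitive_rel :: "(nat \<Rightarrow> nat \<Rightarrow> bool) \<Rightarrow> bool" where
  "transitive_rel R \<longleftrightarrow> (\<forall>x y z. R x y \<longrightarrow> R y z \<longrightarrow> R x z)"

text \<open>Interpolable: transitive, and each initial segment {x. x < y} is directed:
  non-empty, and any two of its elements have an R-upper bound inside it.\<close>

definition interpolable :: "(nat \<Rightarrow> nat \<Rightarrow> bool) \<Rightarrow> bool" where
  "interpolable R \<longleftrightarrow> transitive_rel R \<and>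
     (\<forall>y. (\<exists>x. R x y) \<and>
          (\<forall>x z. R x y \<longrightarrow> R z y \<longrightarrow> (\<exists>w. R w y \<and> R x w \<and> R z w)))"

end

theory Submission
  imports Defs Complex_Main
begin

inductive_cases evZ: "eval X Z x y"
inductive_cases evS: "eval X S x y"
inductive_cases evId: "eval X recf.Id x y"
inductive_cases evFst: "eval X Fst x y"
inductive_cases evSnd: "eval X Snd x y"
inductive_cases evOrc: "eval X Orc x y"
inductive_cases evComp: "eval X (Comp f g) x y"
inductive_cases evPair: "eval X (recf.Pair f g) x y"
inductive_cases evPrimRec: "eval X (PrimRec f g) x y"
inductive_cases evMu: "eval X (Mu f) x y"

lemma eval_det: "eval X p x y \<Longrightarrow> eval X p x y' \<Longrightarrow> y = y'"
proof (induction arbitrary: y' rule: eval.induct)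
  case (eval_Comp g x y f z)
  from eval_Comp.prems obtain y2 where "eval X g x y2" "eval X f y2 y'" by (rule evComp)
  with eval_Comp.IH show ?case by metis
next
  case (eval_Pair f x y g z)
  from eval_Pair.prems obtain y2 z2 where "y' = prod_encode (y2, z2)" "eval X f x y2" "eval X g x z2" by (rule evPair)
  with eval_Pair.IH show ?case by metis
next
  case (eval_PrimRec0 f a y g)
  from eval_PrimRec0.prems show ?case
  proof (rule evPrimRec)
    fix a' assume "prod_encode (a, 0) = prod_encode (a', 0)" "eval X f a' y'"
    then show ?thesis using eval_PrimRec0.IH by (simp add: prod_encode_eq)
  next
    fix a' n' y1 assume "prod_encode (a, 0) = prod_encode (a', Suc n')"
    then show ?thesis by (simp add: prod_encode_eq)
  qed
next
  case (eval_PrimRecS f g a n y z)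
  from eval_PrimRecS.prems show ?case
  proof (rule evPrimRec)
    fix a' assume "prod_encode (a, Suc n) = prod_encode (a', 0)"
    then show ?thesis by (simp add: prod_encode_eq)
  next
    fix a' n' y1 assume e: "prod_encode (a, Suc n) = prod_encode (a', Suc n')"
      and h1: "eval X (PrimRec f g) (prod_encode (a', n')) y1"
      and h2: "eval X g (prod_encode (a', prod_encode (n', y1))) y'"
    from e have "a' = a" "n' = n" by (simp_all add: prod_encode_eq)
    with h1 have "y1 = y" using eval_PrimRecS.IH(1) by metis
    with h2 \<open>a' = a\<close> \<open>n' = n\<close> show ?thesis using eval_PrimRecS.IH(2) by metis
  qed
next
  case (eval_Mu f a n)
  from eval_Mu.prems have h0: "eval X f (prod_encode (a, y')) 0"
     and h1: "\<forall>m<y'. \<exists>v>0. eval X f (prod_encode (a, m)) v" by (rule evMu, simp)+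
  show ?case
  proof (rule ccontr)
    assume ne: "n \<noteq> y'"
    show False
    proof (cases "n < y'")
      case True
      with h1 obtain v where "v > 0" "eval X f (prod_encode (a, n)) v" by blast
      with eval_Mu.IH(1) show False by fastforce
    next
      case False
      with ne have "y' < n" by simp
      with eval_Mu.IH(2) obtain v where "v \<noteq> 0" "\<And>w. eval X f (prod_encode (a, y')) w \<Longrightarrow> v = w"
        by blast
      with h0 show False by blast
    qed
  qed
next
  case (eval_Z x) then show ?case by (auto elim: evZ)
next
  case (eval_S x) then show ?case by (auto elim: evS)
next
  case (eval_Id x) then show ?case by (auto elim: evId)
next
  case (eval_Fst x) then show ?case by (auto elim: evFst)
next
  case (eval_Snd x) then show ?case by (auto elim: evSnd)
next
  case (eval_Orc x) then show ?case by (auto elim: evOrc)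
qed


lemma code_inj: "code p = code q \<Longrightarrow> p = q"
proof (induction p arbitrary: q)
  case (Comp p1 p2) 
  from Comp.prems show ?case by (cases q) (auto simp: prod_encode_eq dest: Comp.IH)
next
  case (Pair p1 p2) 
  from Pair.prems show ?case by (cases q) (auto simp: prod_encode_eq dest: Pair.IH)
next
  case (PrimRec p1 p2)
  from PrimRec.prems show ?case by (cases q) (auto simp: prod_encode_eq dest: PrimRec.IH)
next
  case (Mu p1)
  from Mu.prems show ?case by (cases q) (auto simp: prod_encode_eq dest: Mu.IH)
next
  case Z
  then show ?case by (cases q) (simp_all add: prod_encode_eq)
next
  case S
  then show ?case by (cases q) (simp_all add: prod_encode_eq)
next
  case Id
  then show ?case by (cases q) (simp_all add: prod_encode_eq)
next
  case Fst
  then show ?case by (cases q) (simp_all add: prod_encode_eq)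
next
  case Snd
  then show ?case by (cases q) (simp_all add: prod_encode_eq)
next
  case Orc
  then show ?case by (cases q) (simp_all add: prod_encode_eq)
qed

section \<open>Computable functions\<close>

definition cf :: "nat set \<Rightarrow> (nat \<Rightarrow> nat) \<Rightarrow> bool" where
  "cf X f \<longleftrightarrow> (\<exists>p. \<forall>x. eval X p x (f x))"

definition cp :: "nat set \<Rightarrow> (nat \<Rightarrow> bool) \<Rightarrow> bool" where
  "cp X P \<longleftrightarrow> cf X (\<lambda>x. if P x then 1 else 0)"

fun cprog :: "nat \<Rightarrow> recf" where
  "cprog 0 = Z"
| "cprog (Suc k) = Comp S (cprog k)"

lemma eval_cprog: "eval X (cprog k) x k"
  by (induction k) (auto intro: eval.intros)

lemma cf_const[intro]: "cf X (\<lambda>x. c)"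
  unfolding cf_def using eval_cprog by blast

lemma cf_id[intro]: "cf X (\<lambda>x. x)"
  unfolding cf_def using eval_Id by blast

lemma cf_comp: "cf X f \<Longrightarrow> cf X g \<Longrightarrow> cf X (\<lambda>x. f (g x))"
  unfolding cf_def by (blast intro: eval_Comp)

lemma cf_fst[intro]: "cf X f \<Longrightarrow> cf X (\<lambda>x. fst (prod_decode (f x)))"
  unfolding cf_def by (blast intro: eval_Comp eval_Fst)

lemma cf_snd[intro]: "cf X f \<Longrightarrow> cf X (\<lambda>x. snd (prod_decode (f x)))"
  unfolding cf_def by (blast intro: eval_Comp eval_Snd)

lemma cf_Suc[intro]: "cf X f \<Longrightarrow> cf X (\<lambda>x. Suc (f x))"
  unfolding cf_def by (blast intro: eval_Comp eval_S)

lemma cf_pair[intro]: "cf X f \<Longrightarrow> cf X g \<Longrightarrow> cf X (\<lambda>x. prod_encode (f x, g x))"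
  unfolding cf_def by (blast intro: eval_Pair)

lemma cp_orc[intro]: "cf X f \<Longrightarrow> cp X (\<lambda>x. f x \<in> X)"
  unfolding cp_def cf_def by (blast intro: eval_Comp eval_Orc)

lemma cf_bin: "cf X (\<lambda>z. h (fst (prod_decode z)) (snd (prod_decode z))) \<Longrightarrow> cf X f \<Longrightarrow> cf X g
   \<Longrightarrow> cf X (\<lambda>x. h (f x) (g x))"
  using cf_comp[of X "\<lambda>z. h (fst (prod_decode z)) (snd (prod_decode z))" "\<lambda>x. prod_encode (f x, g x)"]
  by (simp add: cf_pair)

lemma cf_primrec_raw:
  assumes "cf X F"
    and "cf X (\<lambda>z. G (fst (prod_decode z)) (fst (prod_decode (snd (prod_decode z))))
                  (snd (prod_decode (snd (prod_decode z)))))"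
  shows "cf X (\<lambda>z. rec_nat (F (fst (prod_decode z))) (G (fst (prod_decode z))) (snd (prod_decode z)))"
proof -
  from assms obtain pf pg where pf: "\<And>x. eval X pf x (F x)"
    and pg: "\<And>x. eval X pg x (G (fst (prod_decode x)) (fst (prod_decode (snd (prod_decode x))))
                  (snd (prod_decode (snd (prod_decode x)))))"
    unfolding cf_def by blast
  have "eval X (PrimRec pf pg) (prod_encode (a, n)) (rec_nat (F a) (G a) n)" for a n
  proof (induction n)
    case 0 then show ?case using pf by (auto intro: eval_PrimRec0)
  next
    case (Suc n)
    show ?case using eval_PrimRecS[OF Suc pg[of "prod_encode (a, prod_encode (n, rec_nat (F a) (G a) n))"]]
      by simp
  qed
  then have "eval X (PrimRec pf pg) z (rec_nat (F (fst (prod_decode z))) (G (fst (prod_decode z))) (snd (prod_decode z)))" for z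
    by (metis prod.collapse prod_decode_inverse)
  then show ?thesis unfolding cf_def by blast
qed

lemma cf_primrec:
  assumes "cf X F"
    and "cf X (\<lambda>z. G (fst (prod_decode z)) (fst (prod_decode (snd (prod_decode z))))
                  (snd (prod_decode (snd (prod_decode z)))))"
    and "cf X a" and "cf X m"
  shows "cf X (\<lambda>x. rec_nat (F (a x)) (G (a x)) (m x))"
  using cf_bin[OF cf_primrec_raw[OF assms(1,2)] assms(3,4)] by simp

lemma cf_mu:
  assumes "cp X (\<lambda>z. P (fst (prod_decode z)) (snd (prod_decode z)))"
    and "\<And>a. \<exists>n. P a n"
  shows "cf X (\<lambda>a. LEAST n. P a n)"
proof -
  from assms(1) obtain p where p: "\<And>z. eval X p z (if P (fst (prod_decode z)) (snd (prod_decode z)) then 1 else 0)"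
    unfolding cp_def cf_def by blast
  define q where "q = Comp (Comp (PrimRec (cprog 1) (cprog 0)) (recf.Pair Z recf.Id)) p"
  have ex: "\<exists>y. eval X (PrimRec (cprog 1) (cprog 0)) (prod_encode (0, k)) y" for k
  proof (induction k)
    case 0 then show ?case using eval_PrimRec0[OF eval_cprog[of X 1 0]] by blast
  next
    case (Suc k) then obtain y where "eval X (PrimRec (cprog 1) (cprog 0)) (prod_encode (0, k)) y" by blast
    from eval_PrimRecS[OF this eval_cprog[of X 0]] show ?case by blast
  qed
  have pr: "eval X (PrimRec (cprog 1) (cprog 0)) (prod_encode (0, k)) (if k = 0 then 1 else 0)" for k
  proof (cases k)
    case 0 then show ?thesis using eval_PrimRec0[OF eval_cprog[of X 1 0]] by simp
  next
    case (Suc k')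
    from ex[of k'] obtain y where "eval X (PrimRec (cprog 1) (cprog 0)) (prod_encode (0, k')) y" by blast
    from eval_PrimRecS[OF this eval_cprog[of X 0]] Suc show ?thesis by simp
  qed
  have nz: "eval X (Comp (PrimRec (cprog 1) (cprog 0)) (recf.Pair Z recf.Id)) k (if k = 0 then 1 else 0)" for k
    using eval_Comp[OF eval_Pair[OF eval_Z eval_Id] pr] by simp
  have q: "eval X q z (if P (fst (prod_decode z)) (snd (prod_decode z)) then 0 else 1)" for z
  proof -
    have "eval X q z (if (if P (fst (prod_decode z)) (snd (prod_decode z)) then 1 else 0) = (0::nat) then 1 else 0)"
      unfolding q_def by (rule eval_Comp[OF p nz])
    then show ?thesis by (cases "P (fst (prod_decode z)) (snd (prod_decode z))") simp_all
  qed
  have "eval X (Mu q) a (LEAST n. P a n)" for a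
  proof (rule eval_Mu)
    show "eval X q (prod_encode (a, LEAST n. P a n)) 0"
      using q[of "prod_encode (a, LEAST n. P a n)"] LeastI_ex[OF assms(2)] by simp
    show "\<forall>m<(LEAST n. P a n). \<exists>v. v \<noteq> 0 \<and> eval X q (prod_encode (a, m)) v"
    proof (intro allI impI)
      fix m assume "m < (LEAST n. P a n)"
      then have "\<not> P a m" by (rule not_less_Least)
      then show "\<exists>v. v \<noteq> 0 \<and> eval X q (prod_encode (a, m)) v"
        using q[of "prod_encode (a, m)"] by (intro exI[of _ 1]) simp
    qed
  qed
  then show ?thesis unfolding cf_def by blast
qed

section \<open>Arithmetic closure\<close>

lemma cf_add[intro]: "cf X f \<Longrightarrow> cf X g \<Longrightarrow> cf X (\<lambda>x. f x + g x)"
proof -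
  assume "cf X f" "cf X g"
  have "cf X (\<lambda>x. rec_nat (f x) (\<lambda>n r. Suc r) (g x))"
    by (rule cf_primrec[where F="\<lambda>a. a" and G="\<lambda>a n r. Suc r"]) (intro \<open>cf X f\<close> \<open>cf X g\<close> cf_Suc cf_id cf_snd cf_fst cf_const)+
  moreover have "rec_nat a (\<lambda>n r. Suc r) b = a + b" for a b :: nat by (induction b) auto
  ultimately show ?thesis by simp
qed

lemma cf_mult[intro]: "cf X f \<Longrightarrow> cf X g \<Longrightarrow> cf X (\<lambda>x. f x * g x)"
proof -
  assume "cf X f" "cf X g"
  have "cf X (\<lambda>x. rec_nat ((\<lambda>a. 0) (f x)) (\<lambda>n r. r + f x) (g x))"
    by (rule cf_primrec[where F="\<lambda>a. 0" and G="\<lambda>a n r. r + a"]) (intro \<open>cf X f\<close> \<open>cf X g\<close> cf_add cf_Suc cf_id cf_snd cf_fst cf_const)+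
  moreover have "rec_nat 0 (\<lambda>n r. r + a) b = a * b" for a b :: nat by (induction b) auto
  ultimately show ?thesis by simp
qed

lemma cf_pred: "cf X f \<Longrightarrow> cf X (\<lambda>x. f x - 1)"
proof -
  assume "cf X f"
  have "cf X (\<lambda>x. rec_nat ((\<lambda>a. 0) (f x)) ((\<lambda>a n r. n) (f x)) (f x))"
    by (rule cf_primrec) (intro \<open>cf X f\<close> cf_id cf_snd cf_fst cf_const)+
  moreover have "rec_nat 0 (\<lambda>n r. n) b = b - 1" for b :: nat by (cases b) auto
  ultimately show ?thesis by simp
qed

lemma cf_sub[intro]: "cf X f \<Longrightarrow> cf X g \<Longrightarrow> cf X (\<lambda>x. f x - g x)"
proof -
  assume "cf X f" "cf X g"
  have "cf X (\<lambda>x. rec_nat (f x) (\<lambda>n r. r - 1) (g x))"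
    by (rule cf_primrec[where F="\<lambda>a. a" and G="\<lambda>a n r. r - 1"]) (intro \<open>cf X f\<close> \<open>cf X g\<close> cf_pred cf_id cf_snd cf_fst)+
  moreover have "rec_nat a (\<lambda>n r. r - 1) b = a - b" for a b :: nat by (induction b) auto
  ultimately show ?thesis by simp
qed

lemma cf_pow[intro]: "cf X f \<Longrightarrow> cf X g \<Longrightarrow> cf X (\<lambda>x. f x ^ g x)"
proof -
  assume "cf X f" "cf X g"
  have "cf X (\<lambda>x. rec_nat ((\<lambda>a. 1) (f x)) (\<lambda>n r. r * f x) (g x))"
    by (rule cf_primrec[where F="\<lambda>a. 1" and G="\<lambda>a n r. r * a"]) (intro \<open>cf X f\<close> \<open>cf X g\<close> cf_add cf_mult cf_Suc cf_id cf_snd cf_fst cf_const)+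
  moreover have "rec_nat 1 (\<lambda>n r. r * a) b = a ^ b" for a b :: nat by (induction b) auto
  ultimately show ?thesis by simp
qed

lemma cf_cp: "cp X P \<Longrightarrow> cf X (\<lambda>x. if P x then 1 else 0)"
  unfolding cp_def .

lemma cp_cf: "cf X (\<lambda>x. if P x then 1 else 0) \<Longrightarrow> cp X P"
  unfolding cp_def .

lemma cp_less[intro]: "cf X f \<Longrightarrow> cf X g \<Longrightarrow> cp X (\<lambda>x. f x < g x)"
proof -
  assume "cf X f" "cf X g"
  have "cf X (\<lambda>x. 1 - (1 - (g x - f x)))" by (intro cf_sub \<open>cf X f\<close> \<open>cf X g\<close> cf_const)
  moreover have "(1 - (1 - (b - a))) = (if a < b then 1 else (0::nat))" for a b :: nat by auto
  ultimately show ?thesis unfolding cp_def by simp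
qed

lemma cp_not[intro]: "cp X P \<Longrightarrow> cp X (\<lambda>x. \<not> P x)"
proof -
  assume "cp X P"
  then have "cf X (\<lambda>x. 1 - (if P x then 1 else 0))" unfolding cp_def by (intro cf_sub cf_const)
  moreover have "(1::nat) - (if b then 1 else 0) = (if \<not> b then 1 else 0)" for b by auto
  ultimately show ?thesis unfolding cp_def by simp
qed

lemma cp_conj[intro]: "cp X P \<Longrightarrow> cp X Q \<Longrightarrow> cp X (\<lambda>x. P x \<and> Q x)"
proof -
  assume "cp X P" "cp X Q"
  then have "cf X (\<lambda>x. (if P x then 1 else 0) * (if Q x then 1 else 0))" unfolding cp_def by (intro cf_mult)
  moreover have "(if a then 1 else 0) * (if b then 1 else 0) = (if a \<and> b then 1 else (0::nat))" for a b by auto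
  ultimately show ?thesis unfolding cp_def by simp
qed

lemma cp_disj[intro]: "cp X P \<Longrightarrow> cp X Q \<Longrightarrow> cp X (\<lambda>x. P x \<or> Q x)"
proof -
  assume "cp X P" "cp X Q"
  then have "cp X (\<lambda>x. \<not> (\<not> P x \<and> \<not> Q x))" by (intro cp_not cp_conj)
  then show ?thesis by simp
qed

lemma cp_imp[intro]: "cp X P \<Longrightarrow> cp X Q \<Longrightarrow> cp X (\<lambda>x. P x \<longrightarrow> Q x)"
proof -
  assume "cp X P" "cp X Q"
  then have "cp X (\<lambda>x. \<not> P x \<or> Q x)" by (intro cp_not cp_disj)
  then show ?thesis by simp
qed

lemma cp_iff[intro]: "cp X P \<Longrightarrow> cp X Q \<Longrightarrow> cp X (\<lambda>x. P x \<longleftrightarrow> Q x)"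
proof -
  assume "cp X P" "cp X Q"
  then have "cp X (\<lambda>x. (P x \<longrightarrow> Q x) \<and> (Q x \<longrightarrow> P x))" by (intro cp_imp cp_conj)
  then show ?thesis by (simp add: iff_conv_conj_imp)
qed

lemma cp_le[intro]: "cf X f \<Longrightarrow> cf X g \<Longrightarrow> cp X (\<lambda>x. f x \<le> g x)"
proof -
  assume "cf X f" "cf X g"
  then have "cp X (\<lambda>x. \<not> g x < f x)" by (intro cp_not cp_less)
  then show ?thesis by (simp add: not_less)
qed

lemma cp_eq[intro]: "cf X f \<Longrightarrow> cf X g \<Longrightarrow> cp X (\<lambda>x. f x = g x)"
proof -
  assume "cf X f" "cf X g"
  then have "cp X (\<lambda>x. f x \<le> g x \<and> g x \<le> f x)" by (intro cp_le cp_conj)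
  then show ?thesis by (simp add: eq_iff)
qed

lemma cp_neq[intro]: "cf X f \<Longrightarrow> cf X g \<Longrightarrow> cp X (\<lambda>x. f x \<noteq> g x)"
  by (intro cp_not cp_eq)

lemma cp_const[intro]: "cp X (\<lambda>x. b)"
  unfolding cp_def by (rule cf_const)

lemma cf_if[intro]: "cp X P \<Longrightarrow> cf X f \<Longrightarrow> cf X g \<Longrightarrow> cf X (\<lambda>x. if P x then f x else g x)"
proof -
  assume "cp X P" "cf X f" "cf X g"
  then have "cf X (\<lambda>x. (if P x then 1 else 0) * f x + (1 - (if P x then 1 else 0)) * g x)"
    unfolding cp_def by (intro cf_add cf_mult cf_sub cf_const)
  moreover have "(if b then 1 else 0) * a + (1 - (if b then 1 else 0)) * c = (if b then a else c)" for b and a c :: nat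
    by simp
  ultimately show ?thesis by simp
qed

lemma cp_if[intro]: "cp X P \<Longrightarrow> cp X Q \<Longrightarrow> cp X R \<Longrightarrow> cp X (\<lambda>x. if P x then Q x else R x)"
proof -
  assume "cp X P" "cp X Q" "cp X R"
  then have "cp X (\<lambda>x. (P x \<and> Q x) \<or> (\<not> P x \<and> R x))" by (intro cp_disj cp_conj cp_not)
  then show ?thesis by (simp add: if_bool_eq_disj)
qed

lemma cp_app2: "cp X (\<lambda>z. P (fst (prod_decode z)) (snd (prod_decode z))) \<Longrightarrow> cf X f \<Longrightarrow> cf X g
   \<Longrightarrow> cp X (\<lambda>x. P (f x) (g x))"
  unfolding cp_def by (rule cf_bin[where h="\<lambda>a b. if P a b then 1 else 0", simplified])

lemma cf_app2: "cf X (\<lambda>z. F (fst (prod_decode z)) (snd (prod_decode z))) \<Longrightarrow> cf X f \<Longrightarrow> cf X g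
   \<Longrightarrow> cf X (\<lambda>x. F (f x) (g x))"
  by (rule cf_bin)

lemmas cfB = cf_const cf_id cf_fst cf_snd cf_Suc cf_pair cf_add cf_mult cf_sub cf_pow cf_if
  cp_less cp_le cp_eq cp_neq cp_not cp_conj cp_disj cp_imp cp_iff cp_const

lemma cp_ball[intro]:
  assumes "cp X (\<lambda>z. P (fst (prod_decode z)) (snd (prod_decode z)))" and "cf X m"
  shows "cp X (\<lambda>x. \<forall>i<m x. P x i)"
proof -
  have "cf X (\<lambda>x. rec_nat ((\<lambda>a. 1) x) (\<lambda>n r. r * (if P x n then 1 else 0)) (m x))"
    by (rule cf_primrec[where F="\<lambda>a. 1" and G="\<lambda>a n r. r * (if P a n then 1 else 0)"])
      (intro assms cf_cp cp_app2[OF assms(1)] cfB)+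
  moreover have "rec_nat 1 (\<lambda>n r. r * (if P a n then 1 else 0)) k = (if \<forall>i<k. P a i then 1 else (0::nat))" for a k
    by (induction k) (auto simp: less_Suc_eq)
  ultimately show ?thesis unfolding cp_def by simp
qed

lemma cp_bex[intro]:
  assumes "cp X (\<lambda>z. P (fst (prod_decode z)) (snd (prod_decode z)))" and "cf X m"
  shows "cp X (\<lambda>x. \<exists>i<m x. P x i)"
proof -
  have "cp X (\<lambda>x. \<not> (\<forall>i<m x. \<not> P x i))"
    by (rule cp_not, rule cp_ball[OF cp_not[OF assms(1)] assms(2)])
  then show ?thesis by simp
qed

definition bmin :: "(nat \<Rightarrow> bool) \<Rightarrow> nat \<Rightarrow> nat" where
  "bmin P m = (if \<exists>i<m. P i then (LEAST i. P i) else m)"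

lemma bmin_rec: "bmin P (Suc m) = (if bmin P m < m then bmin P m else if P m then m else Suc m)"
proof -
  have A: "bmin P m \<le> m" for m unfolding bmin_def
    by (auto intro: Least_le[THEN order.trans] less_imp_le)
  show ?thesis
  proof (cases "\<exists>i<m. P i")
    case True
    then have "(LEAST i. P i) < m" by (meson LeastI_ex Least_le le_less_trans)
    moreover have "\<exists>i<Suc m. P i" using True less_SucI by blast
    ultimately show ?thesis using True unfolding bmin_def by auto
  next
    case False
    then have "bmin P m = m" unfolding bmin_def by (rule if_not_P)
    have "P m \<Longrightarrow> (LEAST i. P i) = m" using False by (metis LeastI Least_le le_neq_implies_less)
    show ?thesis
    proof (cases "P m")
      case True
      then have "\<exists>i<Suc m. P i" by blast
      then have "bmin P (Suc m) = m" unfolding bmin_def using \<open>P m \<Longrightarrow> (LEAST i. P i) = m\<close> True by simp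
      then show ?thesis using \<open>bmin P m = m\<close> True by simp
    next
      case F2: False
      then have "\<not> (\<exists>i<Suc m. P i)" using False less_Suc_eq by auto
      then have "bmin P (Suc m) = Suc m" unfolding bmin_def by (rule if_not_P)
      then show ?thesis using \<open>bmin P m = m\<close> F2 by simp
    qed
  qed
qed

lemma bmin_0: "bmin P 0 = 0" unfolding bmin_def by simp

lemma cf_bmin[intro]:
  assumes "cp X (\<lambda>z. P (fst (prod_decode z)) (snd (prod_decode z)))" and "cf X m"
  shows "cf X (\<lambda>x. bmin (P x) (m x))"
proof -
  have "cf X (\<lambda>x. rec_nat ((\<lambda>a. 0) x) (\<lambda>n r. if r < n then r else if P x n then n else Suc n) (m x))"
    by (rule cf_primrec[where F="\<lambda>a. 0" and G="\<lambda>a n r. if r < n then r else if P a n then n else Suc n"])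
      (intro assms cp_app2[OF assms(1)] cfB)+
  moreover have "rec_nat 0 (\<lambda>n r. if r < n then r else if P a n then n else Suc n) k = bmin (P a) k" for a k
    by (induction k) (simp_all add: bmin_0 bmin_rec)
  ultimately show ?thesis by simp
qed

lemma bmin_le: "bmin P m \<le> m"
  unfolding bmin_def by (auto intro: Least_le[THEN order.trans] less_imp_le)

lemma bmin_prop: "\<exists>i<m. P i \<Longrightarrow> bmin P m < m \<and> P (bmin P m) \<and> (\<forall>j<bmin P m. \<not> P j)"
  unfolding bmin_def by (auto intro: LeastI dest: not_less_Least) (meson LeastI_ex Least_le le_less_trans)

lemma cf_funpow[intro]:
  assumes "cf X f" "cf X a" "cf X i"
  shows "cf X (\<lambda>x. (f ^^ i x) (a x))"
proof -
  have "cf X (\<lambda>x. rec_nat (a x) ((\<lambda>a n r. f r) x) (i x))"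
    by (rule cf_primrec[where F="\<lambda>a. a" and G="\<lambda>a n r. f r"])
      (intro assms cf_comp[OF assms(1)] cfB)+
  moreover have "rec_nat b (\<lambda>n r. f r) k = (f ^^ k) b" for b k by (induction k) auto
  ultimately show ?thesis by simp
qed

lemma cf_mu2:
  assumes "cp X (\<lambda>z. P (fst (prod_decode z)) (snd (prod_decode z)))"
    and "\<And>a. \<exists>n. P a n" and "cf X f"
  shows "cf X (\<lambda>x. LEAST n. P (f x) n)"
  using cf_comp[OF cf_mu[OF assms(1,2)] assms(3)] .

lemma cf_div2[intro]: "cf X f \<Longrightarrow> cf X (\<lambda>x. f x div 2)"
proof -
  assume "cf X f"
  have "cf X (\<lambda>x. bmin (\<lambda>q. f x < 2 * q + 2) (f x))"
    by (intro cf_bmin \<open>cf X f\<close> cp_less cf_add cf_mult cf_const cf_fst cf_snd cf_id cf_comp[OF \<open>cf X f\<close>])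
  moreover have "bmin (\<lambda>q. n < 2 * q + 2) n = n div 2" for n :: nat
  proof -
    have ex: "\<exists>i<Suc n. n < 2 * i + 2" by (rule exI[of _ n]) auto
    show ?thesis
    proof (cases "n = 0")
      case True then show ?thesis by (simp add: bmin_def)
    next
      case False
      then have e: "\<exists>i<n. n < 2 * i + 2" by (intro exI[of _ "n div 2"]) auto
      from bmin_prop[OF e] have h: "n < 2 * bmin (\<lambda>q. n < 2 * q + 2) n + 2"
        "\<forall>j<bmin (\<lambda>q. n < 2 * q + 2) n. \<not> n < 2 * j + 2" by auto
      have "n < 2 * (n div 2) + 2" by auto
      then have "bmin (\<lambda>q. n < 2 * q + 2) n \<le> n div 2" using h(2) not_less by blast
      moreover have "n div 2 \<le> bmin (\<lambda>q. n < 2 * q + 2) n" using h(1) by auto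
      ultimately show ?thesis by simp
    qed
  qed
  ultimately show ?thesis by simp
qed

lemma cf_mod2[intro]: "cf X f \<Longrightarrow> cf X (\<lambda>x. f x mod 2)"
proof -
  assume "cf X f"
  then have "cf X (\<lambda>x. f x - 2 * (f x div 2))" by (intro cf_sub cf_mult cf_const cf_div2)
  then show ?thesis by (simp add: minus_div_mult_eq_mod[symmetric] mult.commute)
qed

definition ntl :: "nat \<Rightarrow> nat" where "ntl c = (if c = 0 then 0 else snd (prod_decode (c - 1)))"
definition nhd :: "nat \<Rightarrow> nat" where "nhd c = fst (prod_decode (c - 1))"
definition el :: "nat \<Rightarrow> nat \<Rightarrow> nat" where "el c j = nhd ((ntl ^^ j) c)"

lemma cf_ntl[intro]: "cf X f \<Longrightarrow> cf X (\<lambda>x. ntl (f x))"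
  unfolding ntl_def by (intro cfB cf_pred)

lemma cf_nhd[intro]: "cf X f \<Longrightarrow> cf X (\<lambda>x. nhd (f x))"
  unfolding nhd_def by (intro cfB cf_pred)

lemma cf_el[intro]: "cf X f \<Longrightarrow> cf X g \<Longrightarrow> cf X (\<lambda>x. el (f x) (g x))"
  unfolding el_def by (intro cf_nhd cf_funpow) (auto intro: cf_ntl[OF cf_id, simplified])

lemma dec_le1: "fst (prod_decode n) \<le> n"
  by (metis le_prod_encode_1 prod.collapse prod_decode_inverse)
lemma dec_le2: "snd (prod_decode n) \<le> n"
  by (metis le_prod_encode_2 prod.collapse prod_decode_inverse)

lemma list_decode_Suc': "list_decode (Suc n) = fst (prod_decode n) # list_decode (snd (prod_decode n))"
  by (simp split: prod.split)

declare list_decode.simps(2)[simp del] list_decode_Suc'[simp]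

lemma list_decode_nil: "list_decode c = [] \<longleftrightarrow> c = 0"
  by (cases c) (simp_all add: list_decode_Suc')

lemma list_decode_ntl: "list_decode (ntl c) = tl (list_decode c)"
  by (cases c) (simp_all add: ntl_def list_decode_Suc')

lemma list_decode_hd: "c \<noteq> 0 \<Longrightarrow> hd (list_decode c) = nhd c"
  by (cases c) (simp_all add: nhd_def list_decode_Suc')

lemma list_decode_funpow: "list_decode ((ntl ^^ i) c) = drop i (list_decode c)"
  by (induction i) (simp_all add: list_decode_ntl drop_Suc tl_drop)

lemma len_iff: "i < length (list_decode c) \<longleftrightarrow> (ntl ^^ i) c \<noteq> 0"
proof -
  have "(ntl ^^ i) c \<noteq> 0 \<longleftrightarrow> drop i (list_decode c) \<noteq> []"
    using list_decode_nil[of "(ntl ^^ i) c"] list_decode_funpow[of i c] by simp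
  then show ?thesis by (simp add: not_le)
qed

lemma nth_el: "i < length (list_decode c) \<Longrightarrow> list_decode c ! i = el c i"
proof -
  assume i: "i < length (list_decode c)"
  then have nz: "(ntl ^^ i) c \<noteq> 0" using len_iff by simp
  have "list_decode c ! i = hd (drop i (list_decode c))" using i by (simp add: hd_drop_conv_nth)
  also have "\<dots> = hd (list_decode ((ntl ^^ i) c))" by (simp add: list_decode_funpow)
  also have "\<dots> = el c i" using nz by (simp add: list_decode_hd el_def)
  finally show ?thesis .
qed

lemma list_decode_bound: "(length (list_decode c) \<le> c) \<and> (\<forall>v\<in>set (list_decode c). v < c)"
proof (induction c rule: list_decode.induct)
  case 1 then show ?case by simp
next
  case (2 n)
  have h: "snd (prod_decode n) \<le> n" "fst (prod_decode n) \<le> n" by (rule dec_le2, rule dec_le1)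
  from 2[of "fst (prod_decode n)" "snd (prod_decode n)"] have IH: "length (list_decode (snd (prod_decode n))) \<le> snd (prod_decode n)"
    "\<forall>v\<in>set (list_decode (snd (prod_decode n))). v < snd (prod_decode n)"
    by auto
  show ?case using IH h by (auto simp: list_decode_Suc')
qed

section \<open>Derivations\<close>

definition tg :: "nat \<Rightarrow> nat" where "tg u = fst (prod_decode u)"
definition pl :: "nat \<Rightarrow> nat" where "pl u = snd (prod_decode u)"
definition tE :: "nat \<Rightarrow> nat" where "tE t = fst (prod_decode t)"
definition tX :: "nat \<Rightarrow> nat" where "tX t = fst (prod_decode (snd (prod_decode t)))"
definition tY :: "nat \<Rightarrow> nat" where "tY t = snd (prod_decode (snd (prod_decode t)))"
definition ck :: "nat \<Rightarrow> nat" where "ck e = fst (prod_decode e)"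
definition cr :: "nat \<Rightarrow> nat" where "cr e = snd (prod_decode e)"
definition jd :: "nat \<Rightarrow> nat \<Rightarrow> nat \<Rightarrow> nat" where "jd e x y = prod_encode (0, prod_encode (e, prod_encode (x, y)))"
definition cd :: "nat \<Rightarrow> nat" where "cd e = prod_encode (1, e)"

lemmas acc_defs = tg_def pl_def tE_def tX_def tY_def ck_def cr_def jd_def cd_def

definition okC :: "(nat \<Rightarrow> bool) \<Rightarrow> nat \<Rightarrow> bool" where
  "okC M e \<longleftrightarrow> (ck e \<le> 5 \<and> cr e = 0)
     \<or> ((ck e = 6 \<or> ck e = 7 \<or> ck e = 8) \<and> M (cd (fst (prod_decode (cr e)))) \<and> M (cd (snd (prod_decode (cr e)))))
     \<or> (ck e = 9 \<and> M (cd (cr e)))"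

definition okAt :: "nat set \<Rightarrow> nat \<Rightarrow> nat \<Rightarrow> nat \<Rightarrow> bool" where
  "okAt Ob e x y \<longleftrightarrow> cr e = 0 \<and>
     ((ck e = 0 \<and> y = 0) \<or> (ck e = 1 \<and> y = Suc x) \<or> (ck e = 2 \<and> y = x)
   \<or> (ck e = 3 \<and> y = fst (prod_decode x)) \<or> (ck e = 4 \<and> y = snd (prod_decode x))
   \<or> (ck e = 5 \<and> y = (if x \<in> Ob then 1 else 0)))"

definition okCo :: "(nat \<Rightarrow> bool) \<Rightarrow> nat \<Rightarrow> nat \<Rightarrow> nat \<Rightarrow> bool" where
  "okCo M e x y \<longleftrightarrow> ck e = 6 \<and> (\<exists>v. M v \<and> tg v = 0 \<and> tE (pl v) = snd (prod_decode (cr e)) \<and> tX (pl v) = x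
          \<and> M (jd (fst (prod_decode (cr e))) (tY (pl v)) y))"

definition okPa :: "(nat \<Rightarrow> bool) \<Rightarrow> nat \<Rightarrow> nat \<Rightarrow> nat \<Rightarrow> bool" where
  "okPa M e x y \<longleftrightarrow> ck e = 7 \<and> M (jd (fst (prod_decode (cr e))) x (fst (prod_decode y)))
          \<and> M (jd (snd (prod_decode (cr e))) x (snd (prod_decode y)))"

definition okP0 :: "(nat \<Rightarrow> bool) \<Rightarrow> nat \<Rightarrow> nat \<Rightarrow> nat \<Rightarrow> bool" where
  "okP0 M e x y \<longleftrightarrow> ck e = 8 \<and> snd (prod_decode x) = 0 \<and> M (cd e) \<and> M (jd (fst (prod_decode (cr e))) (fst (prod_decode x)) y)"

definition okPS :: "(nat \<Rightarrow> bool) \<Rightarrow> nat \<Rightarrow> nat \<Rightarrow> nat \<Rightarrow> bool" where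
  "okPS M e x y \<longleftrightarrow> ck e = 8 \<and> snd (prod_decode x) \<noteq> 0 \<and> (\<exists>v. M v \<and> tg v = 0 \<and> tE (pl v) = e
          \<and> tX (pl v) = prod_encode (fst (prod_decode x), snd (prod_decode x) - 1)
          \<and> M (jd (snd (prod_decode (cr e))) (prod_encode (fst (prod_decode x), prod_encode (snd (prod_decode x) - 1, tY (pl v)))) y))"

definition okMu :: "(nat \<Rightarrow> bool) \<Rightarrow> nat \<Rightarrow> nat \<Rightarrow> nat \<Rightarrow> bool" where
  "okMu M e x y \<longleftrightarrow> ck e = 9 \<and> M (jd (cr e) (prod_encode (x, y)) 0)
          \<and> (\<forall>m<y. \<exists>v. M v \<and> tg v = 0 \<and> tE (pl v) = cr e \<and> tX (pl v) = prod_encode (x, m) \<and> tY (pl v) \<noteq> 0)"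

definition okE :: "nat set \<Rightarrow> (nat \<Rightarrow> bool) \<Rightarrow> nat \<Rightarrow> nat \<Rightarrow> nat \<Rightarrow> bool" where
  "okE Ob M e x y \<longleftrightarrow> okAt Ob e x y \<or> okCo M e x y \<or> okPa M e x y \<or> okP0 M e x y \<or> okPS M e x y \<or> okMu M e x y"

definition okg :: "nat set \<Rightarrow> (nat \<Rightarrow> bool) \<Rightarrow> nat \<Rightarrow> bool" where
  "okg Ob M u \<longleftrightarrow> (tg u = 0 \<and> okE Ob M (tE (pl u)) (tX (pl u)) (tY (pl u))) \<or> (tg u = 1 \<and> okC M (pl u))"

definition valid :: "nat set \<Rightarrow> nat list \<Rightarrow> bool" where
  "valid Ob L \<longleftrightarrow> (\<forall>i<length L. okg Ob (\<lambda>v. \<exists>j<i. L ! j = v) (L ! i))"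

lemma okE_mono: "okE Ob M e x y \<Longrightarrow> (\<And>v. M v \<Longrightarrow> M' v) \<Longrightarrow> okE Ob M' e x y"
proof -
  assume h: "okE Ob M e x y" and m: "\<And>v. M v \<Longrightarrow> M' v"
  have "okCo M e x y \<Longrightarrow> okCo M' e x y" unfolding okCo_def using m by blast
  moreover have "okPa M e x y \<Longrightarrow> okPa M' e x y" unfolding okPa_def using m by blast
  moreover have "okP0 M e x y \<Longrightarrow> okP0 M' e x y" unfolding okP0_def using m by blast
  moreover have "okPS M e x y \<Longrightarrow> okPS M' e x y" unfolding okPS_def using m by blast
  moreover have "okMu M e x y \<Longrightarrow> okMu M' e x y" unfolding okMu_def using m by blast
  ultimately show ?thesis using h unfolding okE_def by blast
qed

lemma okg_mono: "okg Ob M u \<Longrightarrow> (\<And>v. M v \<Longrightarrow> M' v) \<Longrightarrow> okg Ob M' u"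
  unfolding okg_def okC_def using okE_mono by blast

lemma okg_local: "(\<And>q. q \<le> u \<Longrightarrow> q \<in> Ob \<longleftrightarrow> q \<in> Ob') \<Longrightarrow> okg Ob M u = okg Ob' M u"
proof -
  assume h: "\<And>q. q \<le> u \<Longrightarrow> q \<in> Ob \<longleftrightarrow> q \<in> Ob'"
  have "tX (pl u) \<le> u" unfolding acc_defs
    by (meson dec_le1 dec_le2 order.trans)
  then have "tX (pl u) \<in> Ob \<longleftrightarrow> tX (pl u) \<in> Ob'" using h by simp
  then have "okAt Ob (tE (pl u)) (tX (pl u)) (tY (pl u)) = okAt Ob' (tE (pl u)) (tX (pl u)) (tY (pl u))"
    unfolding okAt_def by simp
  then show ?thesis unfolding okg_def okE_def by simp
qed

lemma acc_simps[simp]: "tg (jd e x y) = 0" "pl (jd e x y) = prod_encode (e, prod_encode (x, y))"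
  "tE (prod_encode (e, prod_encode (x, y))) = e" "tX (prod_encode (e, prod_encode (x, y))) = x"
  "tY (prod_encode (e, prod_encode (x, y))) = y" "tg (cd e) = 1" "pl (cd e) = e"
  "ck (prod_encode (a, b)) = a" "cr (prod_encode (a, b)) = b"
  by (simp_all add: acc_defs)

lemma e_split: "e = prod_encode (ck e, cr e)"
  by (simp add: ck_def cr_def)

definition sound :: "nat set \<Rightarrow> nat \<Rightarrow> bool" where
  "sound Ob u \<longleftrightarrow> (tg u = 0 \<longrightarrow> (\<exists>p. code p = tE (pl u) \<and> eval Ob p (tX (pl u)) (tY (pl u))))
                  \<and> (tg u = 1 \<longrightarrow> (\<exists>p. code p = pl u))"

lemma sound_jd: "sound Ob (jd e x y) \<longleftrightarrow> (\<exists>p. code p = e \<and> eval Ob p x y)"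
  by (simp add: sound_def)

lemma sound_cd: "sound Ob (cd e) \<longleftrightarrow> (\<exists>p. code p = e)"
  by (simp add: sound_def)

lemma code_PrimRec_shape: "code p = e \<Longrightarrow> ck e = 8 \<Longrightarrow> \<exists>f g. p = PrimRec f g \<and> cr e = prod_encode (code f, code g)"
  by (cases p) auto

lemma okC_sound:
  assumes M: "\<And>v. M v \<Longrightarrow> sound Ob v" and ok: "okC M e"
  shows "\<exists>p. code p = e"
proof -
  have E: "e = prod_encode (ck e, cr e)" by (rule e_split)
  have R: "cr e = prod_encode (fst (prod_decode (cr e)), snd (prod_decode (cr e)))" by simp
  consider (a) "ck e \<le> 5" "cr e = 0" | (b) "ck e = 6 \<or> ck e = 7 \<or> ck e = 8" "M (cd (fst (prod_decode (cr e))))" "M (cd (snd (prod_decode (cr e))))"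
    | (c) "ck e = 9" "M (cd (cr e))"
    using ok unfolding okC_def by metis
  then show ?thesis
  proof cases
    case a
    then have "ck e = 0 \<or> ck e = 1 \<or> ck e = 2 \<or> ck e = 3 \<or> ck e = 4 \<or> ck e = 5" by auto
    then show ?thesis
    proof (elim disjE)
      assume "ck e = 0" then show ?thesis using a E by (intro exI[of _ Z]) simp
    next
      assume "ck e = 1" then show ?thesis using a E by (intro exI[of _ S]) simp
    next
      assume "ck e = 2" then show ?thesis using a E by (intro exI[of _ recf.Id]) simp
    next
      assume "ck e = 3" then show ?thesis using a E by (intro exI[of _ Fst]) simp
    next
      assume "ck e = 4" then show ?thesis using a E by (intro exI[of _ Snd]) simp
    next
      assume "ck e = 5" then show ?thesis using a E by (intro exI[of _ Orc]) simp
    qed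
  next
    case b
    from M[OF b(2)] obtain p1 where p1: "code p1 = fst (prod_decode (cr e))" by (auto simp: sound_cd)
    from M[OF b(3)] obtain p2 where p2: "code p2 = snd (prod_decode (cr e))" by (auto simp: sound_cd)
    from b(1) show ?thesis
    proof (elim disjE)
      assume "ck e = 6" then show ?thesis using E p1 p2 by (intro exI[of _ "Comp p1 p2"]) simp
    next
      assume "ck e = 7" then show ?thesis using E p1 p2 by (intro exI[of _ "recf.Pair p1 p2"]) simp
    next
      assume "ck e = 8" then show ?thesis using E p1 p2 by (intro exI[of _ "PrimRec p1 p2"]) simp
    qed
  next
    case c
    from M[OF c(2)] obtain p1 where p1: "code p1 = cr e" by (auto simp: sound_cd)
    then show ?thesis using E c by (intro exI[of _ "Mu p1"]) simp
  qed
qed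

lemma okE_sound:
  assumes M: "\<And>v. M v \<Longrightarrow> sound Ob v" and ok: "okE Ob M e x y"
  shows "\<exists>p. code p = e \<and> eval Ob p x y"
proof -
  have E: "e = prod_encode (ck e, cr e)" by (rule e_split)
  have R: "cr e = prod_encode (fst (prod_decode (cr e)), snd (prod_decode (cr e)))" by simp
  have X: "x = prod_encode (fst (prod_decode x), snd (prod_decode x))" by simp
  consider (at) "okAt Ob e x y" | (co) "okCo M e x y" | (pa) "okPa M e x y" | (p0) "okP0 M e x y"
    | (ps) "okPS M e x y" | (mu) "okMu M e x y"
    using ok unfolding okE_def by metis
  then show ?thesis
  proof cases
    case at
    then have c0: "cr e = 0" and
      "(ck e = 0 \<and> y = 0) \<or> (ck e = 1 \<and> y = Suc x) \<or> (ck e = 2 \<and> y = x)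
   \<or> (ck e = 3 \<and> y = fst (prod_decode x)) \<or> (ck e = 4 \<and> y = snd (prod_decode x))
   \<or> (ck e = 5 \<and> y = (if x \<in> Ob then 1 else 0))" unfolding okAt_def by auto
    then show ?thesis
    proof (elim disjE conjE)
      assume "ck e = 0" "y = 0" then show ?thesis using c0 E by (intro exI[of _ Z]) (simp add: eval.intros)
    next
      assume "ck e = 1" "y = Suc x" then show ?thesis using c0 E by (intro exI[of _ S]) (simp add: eval.intros)
    next
      assume "ck e = 2" "y = x" then show ?thesis using c0 E by (intro exI[of _ recf.Id]) (simp add: eval.intros)
    next
      assume "ck e = 3" "y = fst (prod_decode x)" then show ?thesis using c0 E by (intro exI[of _ Fst]) (simp add: eval.intros)
    next
      assume "ck e = 4" "y = snd (prod_decode x)" then show ?thesis using c0 E by (intro exI[of _ Snd]) (simp add: eval.intros)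
    next
      assume "ck e = 5" "y = (if x \<in> Ob then 1 else 0)" then show ?thesis using c0 E by (intro exI[of _ Orc]) (simp add: eval.intros)
    qed
  next
    case co
    then obtain v where k: "ck e = 6" and v: "M v" "tg v = 0" "tE (pl v) = snd (prod_decode (cr e))" "tX (pl v) = x"
      and m2: "M (jd (fst (prod_decode (cr e))) (tY (pl v)) y)" unfolding okCo_def by blast
    from M[OF v(1)] v obtain pg where pg: "code pg = snd (prod_decode (cr e))" "eval Ob pg x (tY (pl v))"
      unfolding sound_def by auto
    from M[OF m2] obtain pf where pf: "code pf = fst (prod_decode (cr e))" "eval Ob pf (tY (pl v)) y"
      by (auto simp: sound_jd)
    show ?thesis using E k pf pg by (intro exI[of _ "Comp pf pg"]) (auto intro: eval.intros)
  next
    case pa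
    then have k: "ck e = 7" and m1: "M (jd (fst (prod_decode (cr e))) x (fst (prod_decode y)))"
      and m2: "M (jd (snd (prod_decode (cr e))) x (snd (prod_decode y)))" unfolding okPa_def by auto
    from M[OF m1] obtain pf where pf: "code pf = fst (prod_decode (cr e))" "eval Ob pf x (fst (prod_decode y))"
      by (auto simp: sound_jd)
    from M[OF m2] obtain pg where pg: "code pg = snd (prod_decode (cr e))" "eval Ob pg x (snd (prod_decode y))"
      by (auto simp: sound_jd)
    have "eval Ob (recf.Pair pf pg) x (prod_encode (fst (prod_decode y), snd (prod_decode y)))"
      using pf pg by (intro eval_Pair)
    then show ?thesis using E k pf pg by (intro exI[of _ "recf.Pair pf pg"]) simp
  next
    case p0
    then have k: "ck e = 8" and n0: "snd (prod_decode x) = 0" and m1: "M (cd e)"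
      and m2: "M (jd (fst (prod_decode (cr e))) (fst (prod_decode x)) y)" unfolding okP0_def by auto
    from M[OF m1] obtain p where p: "code p = e" by (auto simp: sound_cd)
    from code_PrimRec_shape[OF p k] obtain f g where fg: "p = PrimRec f g" "cr e = prod_encode (code f, code g)" by blast
    from M[OF m2] obtain pf where pf: "code pf = fst (prod_decode (cr e))" "eval Ob pf (fst (prod_decode x)) y"
      by (auto simp: sound_jd)
    from pf fg have "pf = f" using code_inj by auto
    with pf have "eval Ob (PrimRec f g) (prod_encode (fst (prod_decode x), 0)) y" by (intro eval_PrimRec0) simp
    then show ?thesis using p fg n0 X by (intro exI[of _ p]) simp
  next
    case ps
    then obtain v where k: "ck e = 8" and n0: "snd (prod_decode x) \<noteq> 0" and v: "M v" "tg v = 0" "tE (pl v) = e"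
      "tX (pl v) = prod_encode (fst (prod_decode x), snd (prod_decode x) - 1)"
      and m2: "M (jd (snd (prod_decode (cr e))) (prod_encode (fst (prod_decode x), prod_encode (snd (prod_decode x) - 1, tY (pl v)))) y)"
      unfolding okPS_def by blast
    from M[OF v(1)] v obtain p where p: "code p = e" "eval Ob p (prod_encode (fst (prod_decode x), snd (prod_decode x) - 1)) (tY (pl v))"
      unfolding sound_def by auto
    from code_PrimRec_shape[OF p(1) k] obtain f g where fg: "p = PrimRec f g" "cr e = prod_encode (code f, code g)" by blast
    from M[OF m2] obtain pg where pg: "code pg = snd (prod_decode (cr e))"
      "eval Ob pg (prod_encode (fst (prod_decode x), prod_encode (snd (prod_decode x) - 1, tY (pl v)))) y"
      by (auto simp: sound_jd)
    from pg fg have "pg = g" using code_inj by auto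
    with p pg fg have "eval Ob (PrimRec f g) (prod_encode (fst (prod_decode x), Suc (snd (prod_decode x) - 1))) y"
      by (intro eval_PrimRecS) auto
    moreover have "Suc (snd (prod_decode x) - 1) = snd (prod_decode x)" using n0 by simp
    ultimately show ?thesis using p fg X by (intro exI[of _ p]) simp
  next
    case mu
    then have k: "ck e = 9" and m1: "M (jd (cr e) (prod_encode (x, y)) 0)"
      and m2: "\<forall>m<y. \<exists>v. M v \<and> tg v = 0 \<and> tE (pl v) = cr e \<and> tX (pl v) = prod_encode (x, m) \<and> tY (pl v) \<noteq> 0"
      unfolding okMu_def by auto
    from M[OF m1] obtain f where f: "code f = cr e" "eval Ob f (prod_encode (x, y)) 0" by (auto simp: sound_jd)
    have "\<forall>m<y. \<exists>w. w \<noteq> 0 \<and> eval Ob f (prod_encode (x, m)) w"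
    proof (intro allI impI)
      fix m assume "m < y"
      with m2 obtain v where v: "M v" "tg v = 0" "tE (pl v) = cr e" "tX (pl v) = prod_encode (x, m)" "tY (pl v) \<noteq> 0" by blast
      from M[OF v(1)] v obtain q where "code q = cr e" "eval Ob q (prod_encode (x, m)) (tY (pl v))"
        unfolding sound_def by auto
      with f v show "\<exists>w. w \<noteq> 0 \<and> eval Ob f (prod_encode (x, m)) w" using code_inj by metis
    qed
    with f have "eval Ob (Mu f) x y" by (intro eval_Mu)
    then show ?thesis using E k f by (intro exI[of _ "Mu f"]) simp
  qed
qed

lemma okg_sound:
  assumes M: "\<And>v. M v \<Longrightarrow> sound Ob v" and ok: "okg Ob M u"
  shows "sound Ob u"
  using ok okE_sound[OF M] okC_sound[OF M] unfolding okg_def sound_def by auto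

lemma valid_sound: "valid Ob L \<Longrightarrow> i < length L \<Longrightarrow> sound Ob (L ! i)"
proof (induction i rule: less_induct)
  case (less i)
  have "okg Ob (\<lambda>v. \<exists>j<i. L ! j = v) (L ! i)" using less.prems unfolding valid_def by blast
  moreover have "\<And>v. (\<exists>j<i. L ! j = v) \<Longrightarrow> sound Ob v" using less by auto
  ultimately show ?case by (rule okg_sound[rotated])
qed

lemma valid_sound_set: "valid Ob L \<Longrightarrow> u \<in> set L \<Longrightarrow> sound Ob u"
  by (metis in_set_conv_nth valid_sound)


lemma valid_nil: "valid Ob []" unfolding valid_def by simp

lemma valid_append: "valid Ob L1 \<Longrightarrow> valid Ob L2 \<Longrightarrow> valid Ob (L1 @ L2)"
  unfolding valid_def
proof (intro allI impI)
  fix i assume v1: "\<forall>i<length L1. okg Ob (\<lambda>v. \<exists>j<i. L1 ! j = v) (L1 ! i)"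
    and v2: "\<forall>i<length L2. okg Ob (\<lambda>v. \<exists>j<i. L2 ! j = v) (L2 ! i)"
    and i: "i < length (L1 @ L2)"
  show "okg Ob (\<lambda>v. \<exists>j<i. (L1 @ L2) ! j = v) ((L1 @ L2) ! i)"
  proof (cases "i < length L1")
    case True
    then have "okg Ob (\<lambda>v. \<exists>j<i. L1 ! j = v) ((L1 @ L2) ! i)" using v1 by (simp add: nth_append)
    then show ?thesis
    proof (rule okg_mono)
      fix v assume "\<exists>j<i. L1 ! j = v"
      then obtain j where j: "j < i" "L1 ! j = v" by blast
      then have "(L1 @ L2) ! j = v" using True by (simp add: nth_append)
      then show "\<exists>j<i. (L1 @ L2) ! j = v" using j(1) by blast
    qed
  next
    case False
    define k where "k = i - length L1"
    with False i have k: "k < length L2" "i = length L1 + k" by auto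
    then have "okg Ob (\<lambda>v. \<exists>j<k. L2 ! j = v) ((L1 @ L2) ! i)" using v2 by (simp add: nth_append)
    then show ?thesis
    proof (rule okg_mono)
      fix v assume "\<exists>j<k. L2 ! j = v"
      then obtain j where "j < k" "L2 ! j = v" by blast
      then show "\<exists>j<i. (L1 @ L2) ! j = v" using k by (intro exI[of _ "length L1 + j"]) (simp add: nth_append)
    qed
  qed
qed

lemma valid_snoc: "valid Ob L \<Longrightarrow> okg Ob (\<lambda>v. v \<in> set L) u \<Longrightarrow> valid Ob (L @ [u])"
  unfolding valid_def
proof (intro allI impI)
  fix i assume v1: "\<forall>i<length L. okg Ob (\<lambda>v. \<exists>j<i. L ! j = v) (L ! i)"
    and u: "okg Ob (\<lambda>v. v \<in> set L) u" and i: "i < length (L @ [u])"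
  show "okg Ob (\<lambda>v. \<exists>j<i. (L @ [u]) ! j = v) ((L @ [u]) ! i)"
  proof (cases "i < length L")
    case True
    then have "okg Ob (\<lambda>v. \<exists>j<i. L ! j = v) ((L @ [u]) ! i)" using v1 by (simp add: nth_append)
    then show ?thesis
    proof (rule okg_mono)
      fix v assume "\<exists>j<i. L ! j = v"
      then obtain j where j: "j < i" "L ! j = v" by blast
      then have "(L @ [u]) ! j = v" using True by (simp add: nth_append)
      then show "\<exists>j<i. (L @ [u]) ! j = v" using j(1) by blast
    qed
  next
    case False
    with i have "i = length L" by simp
    then have ui: "(L @ [u]) ! i = u" by simp
    have "okg Ob (\<lambda>v. \<exists>j<i. (L @ [u]) ! j = v) u"
    proof (rule okg_mono[OF u])
      fix v assume "v \<in> set L"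
      then obtain j where "j < length L" "L ! j = v" by (auto simp: in_set_conv_nth)
      then show "\<exists>j<i. (L @ [u]) ! j = v" using \<open>i = length L\<close> by (auto simp: nth_append)
    qed
    then show ?thesis using ui by simp
  qed
qed

definition has :: "nat set \<Rightarrow> nat \<Rightarrow> bool" where
  "has Ob u \<longleftrightarrow> (\<exists>L. valid Ob L \<and> u \<in> set L)"

lemma has_snoc:
  assumes "valid Ob L" "okg Ob (\<lambda>v. v \<in> set L) u" shows "has Ob u"
  unfolding has_def using valid_snoc[OF assms] by auto

lemma has_list: "(\<forall>m<(n::nat). \<exists>w. P m w \<and> has Ob (F m w)) \<Longrightarrow> \<exists>L. valid Ob L \<and> (\<forall>m<n. \<exists>w. P m w \<and> F m w \<in> set L)"
proof (induction n)
  case 0 then show ?case using valid_nil by auto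
next
  case (Suc n)
  then obtain L where L: "valid Ob L" "\<forall>m<n. \<exists>w. P m w \<and> F m w \<in> set L" by auto
  from Suc.prems obtain w L' where w: "P n w" "valid Ob L'" "F n w \<in> set L'" unfolding has_def by auto
  show ?case
  proof (intro exI conjI)
    show "valid Ob (L @ L')" using L w valid_append by blast
    show "\<forall>m<Suc n. \<exists>w. P m w \<and> F m w \<in> set (L @ L')"
      using L w by (auto simp: less_Suc_eq)
  qed
qed

lemma has2: "has Ob u1 \<Longrightarrow> has Ob u2 \<Longrightarrow> \<exists>L. valid Ob L \<and> u1 \<in> set L \<and> u2 \<in> set L"
  unfolding has_def using valid_append by fastforce

lemma has_code: "has Ob (cd (code p))"
proof (induction p)
  case (Comp p1 p2)
  from has2[OF Comp.IH] obtain L where "valid Ob L" "cd (code p1) \<in> set L" "cd (code p2) \<in> set L" by blast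
  then show ?case by (intro has_snoc) (auto simp: okg_def okC_def)
next
  case (Pair p1 p2)
  from has2[OF Pair.IH] obtain L where "valid Ob L" "cd (code p1) \<in> set L" "cd (code p2) \<in> set L" by blast
  then show ?case by (intro has_snoc) (auto simp: okg_def okC_def)
next
  case (PrimRec p1 p2)
  from has2[OF PrimRec.IH] obtain L where "valid Ob L" "cd (code p1) \<in> set L" "cd (code p2) \<in> set L" by blast
  then show ?case by (intro has_snoc) (auto simp: okg_def okC_def)
next
  case (Mu p1)
  then obtain L where "valid Ob L" "cd (code p1) \<in> set L" unfolding has_def by blast
  then show ?case by (intro has_snoc) (auto simp: okg_def okC_def)
qed (rule has_snoc[OF valid_nil], simp add: okg_def okC_def)+

lemma has_eval: "eval Ob p x y \<Longrightarrow> has Ob (jd (code p) x y)"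
proof (induction rule: eval.induct)
  case (eval_Comp g x y f z)
  from has2[OF eval_Comp.IH] obtain L where L: "valid Ob L" "jd (code g) x y \<in> set L" "jd (code f) y z \<in> set L" by blast
  show ?case
  proof (rule has_snoc[OF L(1)])
    show "okg Ob (\<lambda>v. v \<in> set L) (jd (code (Comp f g)) x z)"
      unfolding okg_def okE_def okCo_def using L by (intro disjI1 conjI disjI2 disjI1) (auto intro!: exI[of _ "jd (code g) x y"])
  qed
next
  case (eval_Pair f x y g z)
  from has2[OF eval_Pair.IH] obtain L where L: "valid Ob L" "jd (code f) x y \<in> set L" "jd (code g) x z \<in> set L" by blast
  show ?case by (rule has_snoc[OF L(1)]) (use L in \<open>simp add: okg_def okE_def okPa_def\<close>)
next
  case (eval_PrimRec0 f a y g)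
  from has2[OF eval_PrimRec0.IH has_code[of Ob "PrimRec f g"]] obtain L
    where L: "valid Ob L" "jd (code f) a y \<in> set L" "cd (code (PrimRec f g)) \<in> set L" by blast
  show ?case by (rule has_snoc[OF L(1)]) (use L in \<open>simp add: okg_def okE_def okP0_def\<close>)
next
  case (eval_PrimRecS f g a n y z)
  from has2[OF eval_PrimRecS.IH] obtain L
    where L: "valid Ob L" "jd (code (PrimRec f g)) (prod_encode (a, n)) y \<in> set L"
      "jd (code g) (prod_encode (a, prod_encode (n, y))) z \<in> set L" by blast
  show ?case
  proof (rule has_snoc[OF L(1)])
    show "okg Ob (\<lambda>v. v \<in> set L) (jd (code (PrimRec f g)) (prod_encode (a, Suc n)) z)"
      unfolding okg_def okE_def okPS_def using L
      by (intro disjI1 conjI disjI2) (auto intro!: exI[of _ "jd (code (PrimRec f g)) (prod_encode (a, n)) y"])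
  qed
next
  case (eval_Mu f a n)
  have "\<forall>m<n. \<exists>w. w \<noteq> 0 \<and> has Ob (jd (code f) (prod_encode (a, m)) w)" using eval_Mu.IH(2) by blast
  from has_list[OF this] obtain L1 where L1: "valid Ob L1"
    "\<forall>m<n. \<exists>w. w \<noteq> 0 \<and> jd (code f) (prod_encode (a, m)) w \<in> set L1" by blast
  from eval_Mu.IH(1) obtain L2 where L2: "valid Ob L2" "jd (code f) (prod_encode (a, n)) 0 \<in> set L2"
    unfolding has_def by blast
  let ?L = "L1 @ L2"
  have vL: "valid Ob ?L" using L1 L2 valid_append by blast
  show ?case
  proof (rule has_snoc[OF vL])
    have "\<forall>m<n. \<exists>v. v \<in> set ?L \<and> tg v = 0 \<and> tE (pl v) = code f \<and> tX (pl v) = prod_encode (a, m) \<and> tY (pl v) \<noteq> 0"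
    proof (intro allI impI)
      fix m assume "m < n"
      with L1 obtain w where "w \<noteq> 0" "jd (code f) (prod_encode (a, m)) w \<in> set L1" by blast
      then show "\<exists>v. v \<in> set ?L \<and> tg v = 0 \<and> tE (pl v) = code f \<and> tX (pl v) = prod_encode (a, m) \<and> tY (pl v) \<noteq> 0"
        by (intro exI[of _ "jd (code f) (prod_encode (a, m)) w"]) simp
    qed
    then show "okg Ob (\<lambda>v. v \<in> set ?L) (jd (code (Mu f)) a n)"
      unfolding okg_def okE_def okMu_def using L2 by simp
  qed
qed (rule has_snoc[OF valid_nil], simp add: okg_def okE_def okAt_def)+

lemma cf_tg[intro]: "cf X f \<Longrightarrow> cf X (\<lambda>x. tg (f x))" unfolding tg_def by (intro cfB)
lemma cf_pl[intro]: "cf X f \<Longrightarrow> cf X (\<lambda>x. pl (f x))" unfolding pl_def by (intro cfB)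
lemma cf_tE[intro]: "cf X f \<Longrightarrow> cf X (\<lambda>x. tE (f x))" unfolding tE_def by (intro cfB)
lemma cf_tX[intro]: "cf X f \<Longrightarrow> cf X (\<lambda>x. tX (f x))" unfolding tX_def by (intro cfB)
lemma cf_tY[intro]: "cf X f \<Longrightarrow> cf X (\<lambda>x. tY (f x))" unfolding tY_def by (intro cfB)
lemma cf_ck[intro]: "cf X f \<Longrightarrow> cf X (\<lambda>x. ck (f x))" unfolding ck_def by (intro cfB)
lemma cf_cr[intro]: "cf X f \<Longrightarrow> cf X (\<lambda>x. cr (f x))" unfolding cr_def by (intro cfB)
lemma cf_cd[intro]: "cf X f \<Longrightarrow> cf X (\<lambda>x. cd (f x))" unfolding cd_def by (intro cfB)
lemma cf_jd[intro]: "cf X f \<Longrightarrow> cf X g \<Longrightarrow> cf X h \<Longrightarrow> cf X (\<lambda>x. jd (f x) (g x) (h x))"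
  unfolding jd_def by (intro cfB)

lemmas cfC = cfB cf_tg cf_pl cf_tE cf_tX cf_tY cf_ck cf_cr cf_cd cf_jd cf_el cp_ball cp_bex

lemma valid_num: "valid Ob (list_decode c) \<longleftrightarrow>
   (\<forall>i<c. (ntl ^^ i) c \<noteq> 0 \<longrightarrow> okg Ob (\<lambda>v. \<exists>j<i. el c j = v) (el c i))"
proof -
  have len: "length (list_decode c) \<le> c" using list_decode_bound by blast
  have "valid Ob (list_decode c) \<longleftrightarrow> (\<forall>i<length (list_decode c). okg Ob (\<lambda>v. \<exists>j<i. el c j = v) (el c i))"
    unfolding valid_def
  proof (intro iffI allI impI)
    fix i assume h: "\<forall>i<length (list_decode c). okg Ob (\<lambda>v. \<exists>j<i. list_decode c ! j = v) (list_decode c ! i)"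
      and i: "i < length (list_decode c)"
    have "(\<lambda>v. \<exists>j<i. list_decode c ! j = v) = (\<lambda>v. \<exists>j<i. el c j = v)"
      using i nth_el by (metis less_trans)
    then show "okg Ob (\<lambda>v. \<exists>j<i. el c j = v) (el c i)" using h i nth_el by metis
  next
    fix i assume h: "\<forall>i<length (list_decode c). okg Ob (\<lambda>v. \<exists>j<i. el c j = v) (el c i)"
      and i: "i < length (list_decode c)"
    have "(\<lambda>v. \<exists>j<i. list_decode c ! j = v) = (\<lambda>v. \<exists>j<i. el c j = v)"
      using i nth_el by (metis less_trans)
    then show "okg Ob (\<lambda>v. \<exists>j<i. list_decode c ! j = v) (list_decode c ! i)" using h i nth_el by metis
  qed
  also have "\<dots> \<longleftrightarrow> (\<forall>i<c. (ntl ^^ i) c \<noteq> 0 \<longrightarrow> okg Ob (\<lambda>v. \<exists>j<i. el c j = v) (el c i))"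
    using len len_iff by (meson less_le_trans)
  finally show ?thesis .
qed

lemma ex_bnd_shift: "(\<exists>v. (\<exists>j<n. g j = v) \<and> P v) = (\<exists>j<n. P (g j))"
  by blast

lemma cp_okg:
  assumes O: "cp X (\<lambda>z. snd (prod_decode z) \<in> Of (fst (prod_decode z)))"
    and fs: "cf X fs" and fc: "cf X fc" and fi: "cf X fi" and fu: "cf X fu"
  shows "cp X (\<lambda>x. okg (Of (fs x)) (\<lambda>v. \<exists>j<fi x. el (fc x) j = v) (fu x))"
proof -
  have Oc: "cf X f \<Longrightarrow> cf X g \<Longrightarrow> cp X (\<lambda>x. f x \<in> Of (g x))" for f g
    by (rule cp_app2[where P="\<lambda>s q. q \<in> Of s", OF _ _ _]) (use O in simp_all)
  show ?thesis
    unfolding okg_def okE_def okAt_def okCo_def okPa_def okP0_def okPS_def okMu_def okC_def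
    apply (simp only: ex_bnd_shift)
    apply simp
    apply (intro cfC Oc fs fc fi fu cf_comp[OF fs] cf_comp[OF fc] cf_comp[OF fi] cf_comp[OF fu])
    done
qed

lemma cp_valid:
  assumes O: "cp X (\<lambda>z. snd (prod_decode z) \<in> Of (fst (prod_decode z)))"
    and fs: "cf X fs" and fc: "cf X fc"
  shows "cp X (\<lambda>x. valid (Of (fs x)) (list_decode (fc x)))"
  unfolding valid_num
  by (intro cp_ball cp_imp cp_neq cf_funpow cf_ntl[OF cf_id] cp_okg[OF O] cfC fs fc cf_comp[OF fs] cf_comp[OF fc])

section \<open>Limit lemma\<close>

lemma set_num: "(\<exists>u\<in>set (list_decode c). P u) \<longleftrightarrow> (\<exists>i<c. (ntl ^^ i) c \<noteq> 0 \<and> P (el c i))"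
proof
  assume "\<exists>u\<in>set (list_decode c). P u"
  then obtain i where i: "i < length (list_decode c)" "P (list_decode c ! i)" by (auto simp: in_set_conv_nth)
  moreover have "length (list_decode c) \<le> c" using list_decode_bound by blast
  ultimately show "\<exists>i<c. (ntl ^^ i) c \<noteq> 0 \<and> P (el c i)" using len_iff nth_el by (metis less_le_trans)
next
  assume "\<exists>i<c. (ntl ^^ i) c \<noteq> 0 \<and> P (el c i)"
  then obtain i where "(ntl ^^ i) c \<noteq> 0" "P (el c i)" by blast
  then show "\<exists>u\<in>set (list_decode c). P u" using len_iff nth_el by (metis nth_mem)
qed

definition Kset :: "nat set \<Rightarrow> nat \<Rightarrow> nat set" where
  "Kset X s = {q. \<exists>c<s. valid X (list_decode c) \<and> (\<exists>u\<in>set (list_decode c). tg u = 0 \<and> tE (pl u) = q \<and> tX (pl u) = q)}"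

lemma cp_Kset: "cp X (\<lambda>z. snd (prod_decode z) \<in> Kset X (fst (prod_decode z)))"
proof -
  have "cp X (\<lambda>z. \<exists>c<fst (prod_decode z). valid ((\<lambda>_. X) z) (list_decode c) \<and>
        (\<exists>i<c. (ntl ^^ i) c \<noteq> 0 \<and> tg (el c i) = 0 \<and> tE (pl (el c i)) = snd (prod_decode z) \<and> tX (pl (el c i)) = snd (prod_decode z)))"
    by (intro cp_bex cp_conj cp_valid[where Of="\<lambda>_. X" and fs="\<lambda>z. z", OF cp_orc[OF cf_snd[OF cf_id]]]
        cp_orc cfC cf_funpow cf_ntl[OF cf_id])
  then show ?thesis unfolding Kset_def by (simp add: set_num)
qed

definition Good :: "nat set \<Rightarrow> nat \<Rightarrow> nat \<Rightarrow> nat \<Rightarrow> nat \<Rightarrow> bool" where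
  "Good X e0 s n c \<longleftrightarrow> valid (Kset X s) (list_decode c) \<and>
      (\<exists>u\<in>set (list_decode c). tg u = 0 \<and> tE (pl u) = e0 \<and> tX (pl u) = n)"

definition Gapp :: "nat set \<Rightarrow> nat \<Rightarrow> nat \<Rightarrow> nat \<Rightarrow> nat" where
  "Gapp X e0 s n = (let c = bmin (Good X e0 s n) s;
       i = bmin (\<lambda>i. (ntl ^^ i) c \<noteq> 0 \<and> tg (el c i) = 0 \<and> tE (pl (el c i)) = e0 \<and> tX (pl (el c i)) = n) c
     in tY (pl (el c i)))"

lemma cp_Good:
  assumes f: "cf X f" and g: "cf X g" and h: "cf X h"
  shows "cp X (\<lambda>x. Good X e0 (f x) (g x) (h x))"
  unfolding Good_def set_num
  by (intro cp_bex cp_conj cp_valid[OF cp_Kset] cfC cf_funpow cf_ntl[OF cf_id] f g h cf_comp[OF f] cf_comp[OF g] cf_comp[OF h])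

lemma cf_Gapp: "cf X (\<lambda>z. Gapp X e0 (fst (prod_decode z)) (snd (prod_decode z)))"
  unfolding Gapp_def Let_def
  by (intro cfC cf_bmin cp_conj cf_funpow cf_ntl[OF cf_id] cp_Good)

lemma valid_local:
  assumes "\<And>q. q < c \<Longrightarrow> q \<in> Ob \<longleftrightarrow> q \<in> Ob'"
  shows "valid Ob (list_decode c) = valid Ob' (list_decode c)"
proof -
  have "okg Ob M u = okg Ob' M u" if "u \<in> set (list_decode c)" for M u
  proof (rule okg_local)
    fix q assume "q \<le> u"
    moreover have "u < c" using that list_decode_bound by blast
    ultimately show "q \<in> Ob \<longleftrightarrow> q \<in> Ob'" using assms by simp
  qed
  then have "\<forall>i<length (list_decode c). okg Ob (\<lambda>v. \<exists>j<i. list_decode c ! j = v) (list_decode c ! i)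
     = okg Ob' (\<lambda>v. \<exists>j<i. list_decode c ! j = v) (list_decode c ! i)"
    by (simp add: nth_mem)
  then show ?thesis unfolding valid_def by simp
qed

lemma finite_choice_bound: "(\<forall>q\<le>(B::nat). P q \<longrightarrow> (\<exists>c::nat. Q q c)) \<Longrightarrow> \<exists>S. \<forall>q\<le>B. P q \<longrightarrow> (\<exists>c<S. Q q c)"
proof (induction B)
  case 0
  then show ?case by (cases "P 0") auto
next
  case (Suc B)
  then obtain S where S: "\<forall>q\<le>B. P q \<longrightarrow> (\<exists>c<S. Q q c)" by auto
  show ?case
  proof (cases "P (Suc B)")
    case True
    with Suc.prems obtain c where c: "Q (Suc B) c" by auto
    show ?thesis
    proof (rule exI[of _ "max S (Suc c)"], intro allI impI)
      fix q assume q: "q \<le> Suc B" "P q"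
      show "\<exists>c'<max S (Suc c). Q q c'"
      proof (cases "q = Suc B")
        case True then show ?thesis using c by (intro exI[of _ c]) auto
      next
        case False
        with q have "q \<le> B" by simp
        with S q obtain c' where "c' < S" "Q q c'" by blast
        then show ?thesis by (intro exI[of _ c']) auto
      qed
    qed
  next
    case False
    show ?thesis
    proof (rule exI[of _ S], intro allI impI)
      fix q assume q: "q \<le> Suc B" "P q"
      with False have "q \<le> B" using le_Suc_eq by blast
      with S q show "\<exists>c<S. Q q c" by blast
    qed
  qed
qed

lemma jump_has: "q \<in> jump X \<Longrightarrow> \<exists>c. valid X (list_decode c) \<and> (\<exists>u\<in>set (list_decode c). tg u = 0 \<and> tE (pl u) = q \<and> tX (pl u) = q)"
proof -
  assume "q \<in> jump X"
  then obtain p y where "code p = q" "eval X p q y" unfolding jump_def by blast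
  then have "has X (jd q q y)" using has_eval by blast
  then obtain L where "valid X L" "jd q q y \<in> set L" unfolding has_def by blast
  then show ?thesis by (intro exI[of _ "list_encode L"]) (auto intro!: bexI[of _ "jd q q y"])
qed

lemma Kset_jump: "q \<in> Kset X s \<Longrightarrow> q \<in> jump X"
proof -
  assume "q \<in> Kset X s"
  then obtain c u where "valid X (list_decode c)" "u \<in> set (list_decode c)" "tg u = 0" "tE (pl u) = q" "tX (pl u) = q"
    unfolding Kset_def by blast
  then have "sound X u" using valid_sound_set by blast
  with \<open>tg u = 0\<close> obtain p where "code p = q" "eval X p q (tY (pl u))"
    unfolding sound_def using \<open>tE (pl u) = q\<close> \<open>tX (pl u) = q\<close> by auto
  then show "q \<in> jump X" unfolding jump_def by blast
qed

lemma limit_lemma: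
  assumes hp: "\<And>n. eval (jump X) p n (F n)"
  shows "\<exists>s0. \<forall>s\<ge>s0. Gapp X (code p) s n = F n"
proof -
  have "has (jump X) (jd (code p) n (F n))" using has_eval[OF hp] .
  then obtain L0 where L0: "valid (jump X) L0" "jd (code p) n (F n) \<in> set L0" unfolding has_def by blast
  define c0 where "c0 = list_encode L0"
  have dc0: "list_decode c0 = L0" unfolding c0_def by simp
  have "\<forall>q\<le>c0. q \<in> jump X \<longrightarrow> (\<exists>c. valid X (list_decode c) \<and> (\<exists>u\<in>set (list_decode c). tg u = 0 \<and> tE (pl u) = q \<and> tX (pl u) = q))"
    using jump_has by blast
  from finite_choice_bound[OF this] obtain S where S:
    "\<forall>q\<le>c0. q \<in> jump X \<longrightarrow> (\<exists>c<S. valid X (list_decode c) \<and> (\<exists>u\<in>set (list_decode c). tg u = 0 \<and> tE (pl u) = q \<and> tX (pl u) = q))"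
    by blast
  show ?thesis
  proof (intro exI[of _ "max S (Suc c0)"] allI impI)
    fix s assume s: "max S (Suc c0) \<le> s"
    have agree: "q \<in> Kset X s \<longleftrightarrow> q \<in> jump X" if "q \<le> c0" for q
    proof
      assume "q \<in> Kset X s" then show "q \<in> jump X" by (rule Kset_jump)
    next
      assume "q \<in> jump X"
      with S that obtain c where "c < S" "valid X (list_decode c)" "\<exists>u\<in>set (list_decode c). tg u = 0 \<and> tE (pl u) = q \<and> tX (pl u) = q"
        by blast
      moreover have "c < s" using \<open>c < S\<close> s by simp
      ultimately show "q \<in> Kset X s" unfolding Kset_def by blast
    qed
    have loc: "valid (Kset X s) (list_decode c) = valid (jump X) (list_decode c)" if "c \<le> c0" for c
      by (rule valid_local) (use that agree in auto)
    have good0: "Good X (code p) s n c0"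
      unfolding Good_def using loc[of c0] L0 dc0 by (auto intro!: bexI[of _ "jd (code p) n (F n)"])
    have c0s: "c0 < s" using s by simp
    define c where "c = bmin (Good X (code p) s n) s"
    have ex: "\<exists>i<s. Good X (code p) s n i" using good0 c0s by blast
    from bmin_prop[OF ex] have gc: "Good X (code p) s n c" and cmin: "\<forall>j<c. \<not> Good X (code p) s n j"
      unfolding c_def by auto
    have "c \<le> c0" using cmin good0 not_less by blast
    then have vc: "valid (jump X) (list_decode c)" using gc loc unfolding Good_def by blast
    define P where "P = (\<lambda>i. (ntl ^^ i) c \<noteq> 0 \<and> tg (el c i) = 0 \<and> tE (pl (el c i)) = code p \<and> tX (pl (el c i)) = n)"
    have "\<exists>i<c. P i" using gc unfolding Good_def P_def set_num by blast
    from bmin_prop[OF this] have Pi: "P (bmin P c)" by blast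
    define i where "i = bmin P c"
    have Pi': "(ntl ^^ i) c \<noteq> 0" "tg (el c i) = 0" "tE (pl (el c i)) = code p" "tX (pl (el c i)) = n"
      using Pi unfolding P_def i_def by auto
    have "i < length (list_decode c)" using Pi'(1) len_iff by blast
    then have "el c i \<in> set (list_decode c)" using nth_el by (metis nth_mem)
    then have "sound (jump X) (el c i)" using vc valid_sound_set by blast
    then obtain p' where "code p' = code p" "eval (jump X) p' n (tY (pl (el c i)))"
      unfolding sound_def using Pi' by auto
    then have "eval (jump X) p n (tY (pl (el c i)))" using code_inj by blast
    then have "tY (pl (el c i)) = F n" using hp eval_det by blast
    then show "Gapp X (code p) s n = F n" unfolding Gapp_def Let_def c_def[symmetric] P_def[symmetric] i_def[symmetric] .
  qed
qed

section \<open>Deciding Delta-2 sets with the jump\<close>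

lemma cf_code_cprog: "cf Y (\<lambda>x. code (cprog x))"
proof -
  have "cf Y (\<lambda>x. rec_nat ((\<lambda>_. prod_encode (0, 0)) ((\<lambda>_. 0) x))
                      ((\<lambda>_ n r. prod_encode (6, prod_encode (prod_encode (1, 0), r))) ((\<lambda>_. 0) x)) x)"
    by (rule cf_primrec) (intro cfB)+
  moreover have "rec_nat (prod_encode (0, 0)) (\<lambda>n r. prod_encode (6, prod_encode (prod_encode (1, 0), r))) x = code (cprog x)" for x
    by (induction x) simp_all
  ultimately show ?thesis by simp
qed

lemma mu_halts:
  assumes pc: "\<And>z. eval X pc z (if P (fst (prod_decode z)) (snd (prod_decode z)) then 1 else 0)"
  shows "(\<exists>v. eval X (Mu pc) a v) \<longleftrightarrow> (\<exists>y. \<not> P a y)"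
proof
  assume "\<exists>v. eval X (Mu pc) a v"
  then obtain v where "eval X (Mu pc) a v" by blast
  then have "eval X pc (prod_encode (a, v)) 0" by (rule evMu)
  with pc[of "prod_encode (a, v)"] have "(if P a v then 1 else 0) = (0::nat)" using eval_det by fastforce
  then show "\<exists>y. \<not> P a y" by (auto split: if_splits)
next
  assume "\<exists>y. \<not> P a y"
  then have ex: "\<exists>y. \<not> P a y" .
  let ?y = "LEAST y. \<not> P a y"
  have "eval X (Mu pc) a ?y"
  proof (rule eval_Mu)
    show "eval X pc (prod_encode (a, ?y)) 0" using pc[of "prod_encode (a, ?y)"] LeastI_ex[OF ex] by simp
    show "\<forall>m<?y. \<exists>v. v \<noteq> 0 \<and> eval X pc (prod_encode (a, m)) v"
    proof (intro allI impI)
      fix m assume "m < ?y"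
      then have "P a m" using not_less_Least by blast
      then show "\<exists>v. v \<noteq> 0 \<and> eval X pc (prod_encode (a, m)) v" using pc[of "prod_encode (a, m)"]
        by (intro exI[of _ 1]) simp
    qed
  qed
  then show "\<exists>v. eval X (Mu pc) a v" by blast
qed

lemma comp_cprog: "eval X (Comp q (cprog a)) e v \<longleftrightarrow> eval X q a v"
proof
  assume "eval X (Comp q (cprog a)) e v"
  then obtain y where "eval X (cprog a) e y" "eval X q y v" by (rule evComp)
  moreover have "y = a" using calculation(1) eval_cprog eval_det by blast
  ultimately show "eval X q a v" by simp
next
  assume "eval X q a v"
  then show "eval X (Comp q (cprog a)) e v" by (rule eval_Comp[OF eval_cprog])
qed

lemma jump_query:
  assumes "cp X (\<lambda>z. P (fst (prod_decode z)) (snd (prod_decode z)))"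
  shows "\<exists>k. \<forall>a. prod_encode (6, prod_encode (k, code (cprog a))) \<in> jump X \<longleftrightarrow> (\<exists>y. \<not> P a y)"
proof -
  from assms obtain pc where pc: "\<And>z. eval X pc z (if P (fst (prod_decode z)) (snd (prod_decode z)) then 1 else 0)"
    unfolding cp_def cf_def by blast
  show ?thesis
  proof (intro exI allI)
    fix a
    have c: "prod_encode (6, prod_encode (code (Mu pc), code (cprog a))) = code (Comp (Mu pc) (cprog a))" by simp
    have "code (Comp (Mu pc) (cprog a)) \<in> jump X \<longleftrightarrow> (\<exists>v. eval X (Comp (Mu pc) (cprog a)) (code (Comp (Mu pc) (cprog a))) v)"
      unfolding jump_def using code_inj by blast
    also have "\<dots> \<longleftrightarrow> (\<exists>v. eval X (Mu pc) a v)" using comp_cprog by blast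
    also have "\<dots> \<longleftrightarrow> (\<exists>y. \<not> P a y)" by (rule mu_halts[OF pc])
    finally show "prod_encode (6, prod_encode (code (Mu pc), code (cprog a))) \<in> jump X \<longleftrightarrow> (\<exists>y. \<not> P a y)"
      using c by simp
  qed
qed

lemma post_delta2:
  assumes c1: "cp X (\<lambda>z. P1 (fst (prod_decode z)) (snd (prod_decode z)))"
    and c0: "cp X (\<lambda>z. P0 (fst (prod_decode z)) (snd (prod_decode z)))"
    and h1: "\<And>n. n \<in> A \<longleftrightarrow> (\<exists>x. \<forall>y. P1 (prod_encode (n, x)) y)"
    and h0: "\<And>n. n \<notin> A \<longleftrightarrow> (\<exists>x. \<forall>y. P0 (prod_encode (n, x)) y)"
  shows "turing_reducible A (jump X)"
proof -
  let ?J = "jump X"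
  from jump_query[OF c1] obtain k1 where k1: "\<And>a. prod_encode (6, prod_encode (k1, code (cprog a))) \<in> ?J \<longleftrightarrow> (\<exists>y. \<not> P1 a y)" by blast
  from jump_query[OF c0] obtain k0 where k0: "\<And>a. prod_encode (6, prod_encode (k0, code (cprog a))) \<in> ?J \<longleftrightarrow> (\<exists>y. \<not> P0 a y)" by blast
  define Q1 where "Q1 a = (prod_encode (6, prod_encode (k1, code (cprog a))) \<in> ?J)" for a
  define Q0 where "Q0 a = (prod_encode (6, prod_encode (k0, code (cprog a))) \<in> ?J)" for a
  have cq1: "cf ?J f \<Longrightarrow> cp ?J (\<lambda>x. Q1 (f x))" for f
    unfolding Q1_def by (intro cp_orc cfB cf_comp[OF cf_code_cprog])
  have cq0: "cf ?J f \<Longrightarrow> cp ?J (\<lambda>x. Q0 (f x))" for f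
    unfolding Q0_def by (intro cp_orc cfB cf_comp[OF cf_code_cprog])
  define R where "R n x = (\<not> Q1 (prod_encode (n, x)) \<or> \<not> Q0 (prod_encode (n, x)))" for n x
  have exR: "\<exists>x. R n x" for n
  proof (cases "n \<in> A")
    case True
    with h1 obtain x where "\<forall>y. P1 (prod_encode (n, x)) y" by blast
    then show ?thesis using k1 unfolding R_def Q1_def by blast
  next
    case False
    with h0 obtain x where "\<forall>y. P0 (prod_encode (n, x)) y" by blast
    then show ?thesis using k0 unfolding R_def Q0_def by blast
  qed
  have cR: "cp ?J (\<lambda>z. R (fst (prod_decode z)) (snd (prod_decode z)))"
    unfolding R_def by (intro cp_disj cp_not cq1 cq0 cfB)
  have ch: "cf ?J (\<lambda>n. LEAST x. R n x)" by (rule cf_mu[OF cR exR])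
  have cout: "cf ?J (\<lambda>n. if \<not> Q1 (prod_encode (n, LEAST x. R n x)) then 1 else 0)"
    by (intro cf_cp cp_not cq1 cfB ch)
  have eq: "(if \<not> Q1 (prod_encode (n, LEAST x. R n x)) then 1 else 0) = (if n \<in> A then 1 else (0::nat))" for n
  proof -
    have r: "R n (LEAST x. R n x)" by (rule LeastI_ex[OF exR])
    show ?thesis
    proof (cases "Q1 (prod_encode (n, LEAST x. R n x))")
      case False
      then have "\<forall>y. P1 (prod_encode (n, LEAST x. R n x)) y" using k1 unfolding Q1_def by blast
      then have "n \<in> A" using h1 by blast
      then show ?thesis using False by simp
    next
      case True
      then have "\<not> Q0 (prod_encode (n, LEAST x. R n x))" using r unfolding R_def by blast
      then have "\<forall>y. P0 (prod_encode (n, LEAST x. R n x)) y" using k0 unfolding Q0_def by blast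
      then have "n \<notin> A" using h0 by blast
      then show ?thesis using True by simp
    qed
  qed
  from cout obtain p where "\<And>n. eval ?J p n (if \<not> Q1 (prod_encode (n, LEAST x. R n x)) then 1 else 0)"
    unfolding cf_def by blast
  then show ?thesis unfolding turing_reducible_def using eq by metis
qed

section \<open>A dense payload order\<close>

definition pm :: "nat \<Rightarrow> nat" where "pm d = fst (prod_decode (d - 1))"
definition pe :: "nat \<Rightarrow> nat" where "pe d = snd (prod_decode (d - 1))"
definition pnum :: "nat \<Rightarrow> nat" where "pnum d = 2 * pm d + 1"

definition plt :: "nat \<Rightarrow> nat \<Rightarrow> bool" where
  "plt d1 d2 \<longleftrightarrow> d1 \<noteq> 0 \<and> (d2 = 0 \<or> pnum d1 * 2 ^ pe d2 < pnum d2 * 2 ^ pe d1)"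

definition rv :: "nat \<Rightarrow> real" where "rv d = real (pnum d) / 2 ^ pe d"

lemma plt_rv: "d1 \<noteq> 0 \<Longrightarrow> d2 \<noteq> 0 \<Longrightarrow> plt d1 d2 \<longleftrightarrow> rv d1 < rv d2"
proof -
  assume "d1 \<noteq> 0" "d2 \<noteq> 0"
  have "pnum d1 * 2 ^ pe d2 < pnum d2 * 2 ^ pe d1 \<longleftrightarrow> real (pnum d1 * 2 ^ pe d2) < real (pnum d2 * 2 ^ pe d1)"
    by (simp only: of_nat_less_iff)
  also have "\<dots> \<longleftrightarrow> real (pnum d1) * 2 ^ pe d2 < real (pnum d2) * 2 ^ pe d1"
    by simp
  also have "\<dots> \<longleftrightarrow> rv d1 < rv d2" unfolding rv_def
    by (simp add: divide_less_eq less_divide_eq mult.commute mult.left_commute)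
  finally show ?thesis using \<open>d1 \<noteq> 0\<close> \<open>d2 \<noteq> 0\<close> unfolding plt_def by simp
qed

lemma plt_irrefl: "\<not> plt d d"
  unfolding plt_def by auto

lemma plt_trans: "plt a b \<Longrightarrow> plt b c \<Longrightarrow> plt a c"
proof -
  assume ab: "plt a b" and bc: "plt b c"
  then have a0: "a \<noteq> 0" and b0: "b \<noteq> 0" unfolding plt_def by auto
  show "plt a c"
  proof (cases "c = 0")
    case True then show ?thesis using a0 unfolding plt_def by simp
  next
    case False
    have "rv a < rv b" using ab plt_rv[OF a0 b0] by simp
    moreover have "rv b < rv c" using bc plt_rv[OF b0 False] by simp
    ultimately have "rv a < rv c" by simp
    then show ?thesis using plt_rv[OF a0 False] by simp
  qed
qed

lemma plt_top: "d \<noteq> 0 \<Longrightarrow> plt d 0"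
  unfolding plt_def by simp

lemma not_plt_0: "\<not> plt 0 d"
  unfolding plt_def by simp

lemma odd_pow_eq:
  fixes a b x y :: nat
  assumes "odd a" "odd b" "a * 2 ^ x = b * 2 ^ y"
  shows "x = y \<and> a = b"
proof -
  have "x = y"
  proof (rule ccontr)
    assume "x \<noteq> y"
    then consider "x < y" | "y < x" by linarith
    then show False
    proof cases
      case 1
      then have "a * 2 ^ x = (b * 2 ^ (y - x)) * 2 ^ x" using assms(3) by (simp add: power_add[symmetric])
      then have "a = b * 2 ^ (y - x)" by simp
      moreover have "even (b * 2 ^ (y - x))" using 1 by simp
      ultimately show False using assms(1) by simp
    next
      case 2
      then have "b * 2 ^ y = (a * 2 ^ (x - y)) * 2 ^ y" using assms(3)[symmetric] by (simp add: power_add[symmetric])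
      then have "b = a * 2 ^ (x - y)" by simp
      moreover have "even (a * 2 ^ (x - y))" using 2 by simp
      ultimately show False using assms(2) by simp
    qed
  qed
  with assms(3) show ?thesis by simp
qed

lemma plt_linear: "d1 \<noteq> d2 \<Longrightarrow> plt d1 d2 \<or> plt d2 d1"
proof -
  assume ne: "d1 \<noteq> d2"
  show ?thesis
  proof (cases "d1 = 0 \<or> d2 = 0")
    case True then show ?thesis using ne unfolding plt_def by auto
  next
    case False
    have "pnum d1 * 2 ^ pe d2 \<noteq> pnum d2 * 2 ^ pe d1"
    proof
      assume "pnum d1 * 2 ^ pe d2 = pnum d2 * 2 ^ pe d1"
      then have "pe d2 = pe d1 \<and> pnum d1 = pnum d2" by (intro odd_pow_eq) (simp_all add: pnum_def)
      then have "prod_decode (d1 - 1) = prod_decode (d2 - 1)" unfolding pe_def pnum_def pm_def by (simp add: prod_eq_iff)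
      then have "d1 - 1 = d2 - 1" by simp
      with False ne show False by linarith
    qed
    then show ?thesis using False unfolding plt_def by auto
  qed
qed

definition mkp :: "nat \<Rightarrow> nat \<Rightarrow> nat" where "mkp m e = Suc (prod_encode (m, e))"

lemma pm_mkp[simp]: "pm (mkp m e) = m" and pe_mkp[simp]: "pe (mkp m e) = e" and mkp_nz[simp]: "mkp m e \<noteq> 0"
  unfolding pm_def pe_def mkp_def by simp_all

lemma plt_below: "\<exists>d'. plt d' d"
proof (cases "d = 0")
  case True then show ?thesis by (intro exI[of _ "mkp 0 0"]) (simp add: plt_def)
next
  case False
  show ?thesis
  proof (intro exI[of _ "mkp (pm d) (pe d + 1)"])
    show "plt (mkp (pm d) (pe d + 1)) d" using False unfolding plt_def pnum_def by simp
  qed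
qed

lemma plt_dense: "plt d1 d2 \<Longrightarrow> \<exists>d. plt d1 d \<and> plt d d2"
proof -
  assume h: "plt d1 d2"
  then have d1: "d1 \<noteq> 0" unfolding plt_def by simp
  show ?thesis
  proof (cases "d2 = 0")
    case True
    let ?d = "mkp (pm d1 + 2 ^ pe d1) (pe d1)"
    have "pnum d1 * 2 ^ pe d1 < pnum ?d * 2 ^ pe d1" unfolding pnum_def by simp
    then show ?thesis using True d1 by (intro exI[of _ ?d]) (simp add: plt_def)
  next
    case False
    define w where "w = pnum d1 * 2 ^ pe d2"
    define w2 where "w2 = pnum d2 * 2 ^ pe d1"
    have ww: "w < w2" using h False unfolding plt_def w_def w2_def by simp
    let ?d = "mkp w (pe d1 + pe d2 + 1)"
    have "pnum d1 * 2 ^ (pe d1 + pe d2 + 1) = 2 * w * 2 ^ pe d1"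
      unfolding w_def by (simp add: power_add)
    also have "\<dots> < (2 * w + 1) * 2 ^ pe d1" by simp
    finally have g1: "pnum d1 * 2 ^ pe ?d < pnum ?d * 2 ^ pe d1" unfolding pnum_def by simp
    have "2 * w + 1 < 2 * w2" using ww by simp
    then have "(2 * w + 1) * 2 ^ pe d2 < (2 * w2) * 2 ^ pe d2" by (rule mult_strict_right_mono) simp
    also have "\<dots> = pnum d2 * 2 ^ (pe d1 + pe d2 + 1)" unfolding w2_def by (simp add: power_add)
    finally have g2: "pnum ?d * 2 ^ pe d2 < pnum d2 * 2 ^ pe ?d" unfolding pnum_def by simp
    show ?thesis using g1 g2 d1 False by (intro exI[of _ ?d]) (simp add: plt_def)
  qed
qed

section \<open>The coding structure\<close>

definition mk :: "nat \<Rightarrow> nat \<Rightarrow> nat \<Rightarrow> nat" where "mk c y d = prod_encode (c, prod_encode (y, d))"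
definition cmp :: "nat \<Rightarrow> nat" where "cmp i = fst (prod_decode i)"
definition yc :: "nat \<Rightarrow> nat" where "yc i = fst (prod_decode (snd (prod_decode i)))"
definition pay :: "nat \<Rightarrow> nat" where "pay i = snd (prod_decode (snd (prod_decode i)))"

lemma mk_simps[simp]: "cmp (mk c y d) = c" "yc (mk c y d) = y" "pay (mk c y d) = d"
  unfolding mk_def cmp_def yc_def pay_def by simp_all

lemma mk_eta: "mk (cmp i) (yc i) (pay i) = i"
  unfolding mk_def cmp_def yc_def pay_def by simp

lemma elem_eq: "cmp i = cmp j \<Longrightarrow> yc i = yc j \<Longrightarrow> pay i = pay j \<Longrightarrow> i = j"
  by (metis mk_eta)

definition isbr :: "nat \<Rightarrow> bool" where "isbr i \<longleftrightarrow> odd (yc i)"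
definition bn :: "nat \<Rightarrow> nat" where "bn i = yc i div 2"

definition cls :: "(nat \<Rightarrow> bool) \<Rightarrow> nat \<Rightarrow> nat" where
  "cls \<phi> x = (if x = 0 then 1 else if \<phi> (x - 1) then 2 else 0)"

definition BL :: "(nat \<Rightarrow> bool) \<Rightarrow> nat \<Rightarrow> nat \<Rightarrow> bool" where
  "BL \<phi> x1 x2 \<longleftrightarrow> cls \<phi> x1 < cls \<phi> x2 \<or> (cls \<phi> x1 = 2 \<and> cls \<phi> x2 = 2 \<and> x1 < x2)
                     \<or> (cls \<phi> x1 = 0 \<and> cls \<phi> x2 = 0 \<and> x2 < x1)"

lemma BL_irrefl: "\<not> BL \<phi> x x" unfolding BL_def by auto
lemma BL_trans: "BL \<phi> x y \<Longrightarrow> BL \<phi> y z \<Longrightarrow> BL \<phi> x z" unfolding BL_def by auto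
lemma BL_linear: "x \<noteq> y \<Longrightarrow> BL \<phi> x y \<or> BL \<phi> y x" unfolding BL_def cls_def by (auto split: if_splits)

definition Rel :: "(nat \<Rightarrow> nat \<Rightarrow> bool) \<Rightarrow> nat \<Rightarrow> nat \<Rightarrow> bool" where
  "Rel F i j \<longleftrightarrow> cmp i = cmp j \<and>
     ((isbr i \<and> isbr j \<and> min (bn i) (cmp i + 1) = min (bn j) (cmp j + 1)
          \<and> (bn i < bn j \<or> (bn i = bn j \<and> plt (pay i) (pay j))))
    \<or> (isbr i \<and> \<not> isbr j)
    \<or> (\<not> isbr i \<and> \<not> isbr j \<and> (BL (F (cmp i)) (bn i) (bn j) \<or> (bn i = bn j \<and> plt (pay i) (pay j)))))"

lemma Rel_irrefl: "\<not> Rel F i i"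
  unfolding Rel_def using plt_irrefl BL_irrefl by auto

lemma Rel_trans: "Rel F i j \<Longrightarrow> Rel F j k \<Longrightarrow> Rel F i k"
  unfolding Rel_def using plt_trans BL_trans by (smt (verit) order.strict_trans)

lemma same_elem: "cmp i = cmp j \<Longrightarrow> bn i = bn j \<Longrightarrow> isbr i = isbr j \<Longrightarrow> pay i = pay j \<Longrightarrow> i = j"
proof -
  assume h: "cmp i = cmp j" "bn i = bn j" "isbr i = isbr j" "pay i = pay j"
  have "yc i = yc j" using h(2,3) unfolding bn_def isbr_def by (metis dvd_mult_div_cancel odd_two_times_div_two_succ)
  then show ?thesis using h elem_eq by blast
qed

lemma Rel_linear_main: "cmp i = cmp j \<Longrightarrow> \<not> isbr i \<Longrightarrow> \<not> isbr j \<Longrightarrow> i \<noteq> j \<Longrightarrow> Rel F i j \<or> Rel F j i"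
proof -
  assume h: "cmp i = cmp j" "\<not> isbr i" "\<not> isbr j" "i \<noteq> j"
  show ?thesis
  proof (cases "bn i = bn j")
    case True
    then have "pay i \<noteq> pay j" using h same_elem by blast
    then consider "plt (pay i) (pay j)" | "plt (pay j) (pay i)" using plt_linear by blast
    then show ?thesis
    proof cases
      case 1 then have "Rel F i j" using h True unfolding Rel_def by simp
      then show ?thesis ..
    next
      case 2 then have "Rel F j i" using h True unfolding Rel_def by simp
      then show ?thesis ..
    qed
  next
    case False
    then consider "BL (F (cmp i)) (bn i) (bn j)" | "BL (F (cmp i)) (bn j) (bn i)" using BL_linear by blast
    then show ?thesis
    proof cases
      case 1 then have "Rel F i j" using h unfolding Rel_def by simp
      then show ?thesis ..
    next
      case 2 then have "Rel F j i" using h unfolding Rel_def by simp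
      then show ?thesis ..
    qed
  qed
qed

lemma Rel_linear_br: "cmp i = cmp j \<Longrightarrow> isbr i \<Longrightarrow> isbr j \<Longrightarrow> min (bn i) (cmp i + 1) = min (bn j) (cmp j + 1)
   \<Longrightarrow> i \<noteq> j \<Longrightarrow> Rel F i j \<or> Rel F j i"
proof -
  assume h: "cmp i = cmp j" "isbr i" "isbr j" "min (bn i) (cmp i + 1) = min (bn j) (cmp j + 1)" "i \<noteq> j"
  show ?thesis
  proof (cases "bn i = bn j")
    case True
    then have "pay i \<noteq> pay j" using h same_elem by blast
    then consider "plt (pay i) (pay j)" | "plt (pay j) (pay i)" using plt_linear by blast
    then show ?thesis
    proof cases
      case 1 then have "Rel F i j" using h True unfolding Rel_def by simp
      then show ?thesis ..
    next
      case 2 then have "Rel F j i" using h True unfolding Rel_def by simp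
      then show ?thesis ..
    qed
  next
    case False
    then consider "bn i < bn j" | "bn j < bn i" by linarith
    then show ?thesis
    proof cases
      case 1 then have "Rel F i j" using h unfolding Rel_def by simp
      then show ?thesis ..
    next
      case 2 then have "Rel F j i" using h unfolding Rel_def by simp
      then show ?thesis ..
    qed
  qed
qed

lemma isbr_mk: "isbr (mk c y d) \<longleftrightarrow> odd y" unfolding isbr_def by simp
lemma bn_mk: "bn (mk c y d) = y div 2" unfolding bn_def by simp

lemma Rel_dense: "Rel F x y \<Longrightarrow> \<exists>w. Rel F x w \<and> Rel F w y"
proof -
  assume r: "Rel F x y"
  let ?c = "cmp y"
  obtain d where d: "plt d (pay y)" using plt_below by blast
  let ?w0 = "mk ?c (yc y) d"
  have w0: "cmp ?w0 = cmp y" "isbr ?w0 = isbr y" "bn ?w0 = bn y" "pay ?w0 = d"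
    by (simp_all add: isbr_def bn_def)
  have w0y: "Rel F ?w0 y" using w0 d unfolding Rel_def by auto
  show ?thesis
  proof (cases "bn x = bn y \<and> isbr x = isbr y")
    case True
    then have "plt (pay x) (pay y)" using r BL_irrefl unfolding Rel_def by auto
    then obtain d' where d': "plt (pay x) d'" "plt d' (pay y)" using plt_dense by blast
    let ?w = "mk ?c (yc y) d'"
    have w: "cmp ?w = cmp y" "isbr ?w = isbr y" "bn ?w = bn y" "pay ?w = d'"
      by (simp_all add: isbr_def bn_def)
    have "Rel F x ?w" "Rel F ?w y" using r True w d' unfolding Rel_def by auto
    then show ?thesis by blast
  next
    case False
    have "Rel F x ?w0" using r False w0 unfolding Rel_def by auto
    then show ?thesis using w0y by blast
  qed
qed

lemma Rel_below: "\<exists>x. Rel F x y"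
proof -
  obtain d where d: "plt d (pay y)" using plt_below by blast
  show ?thesis
  proof (cases "isbr y")
    case True
    let ?w = "mk (cmp y) (yc y) d"
    have "Rel F ?w y" using True d unfolding Rel_def by (simp add: isbr_def bn_def)
    then show ?thesis by blast
  next
    case False
    let ?w = "mk (cmp y) 1 0"
    have "Rel F ?w y" using False unfolding Rel_def by (simp add: isbr_def)
    then show ?thesis by blast
  qed
qed

lemma Rel_ub: "Rel F x y \<Longrightarrow> Rel F z y \<Longrightarrow> \<exists>u. Rel F u y \<and> (Rel F x u \<or> x = u) \<and> (Rel F z u \<or> z = u)"
proof -
  assume xy: "Rel F x y" and zy: "Rel F z y"
  have cxz: "cmp x = cmp z" using xy zy unfolding Rel_def by simp
  have lin: "Rel F x z \<or> Rel F z x \<or> x = z" if "isbr x = isbr z" "isbr x \<longrightarrow> min (bn x) (cmp x + 1) = min (bn z) (cmp z + 1)"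
  proof (cases "x = z")
    case False
    show ?thesis
    proof (cases "isbr x")
      case True then show ?thesis using Rel_linear_br[where F=F, OF cxz _ _ _ False] that by blast
    next
      case F2: False then show ?thesis using Rel_linear_main[where F=F, OF cxz _ _ False] that by blast
    qed
  qed simp
  show ?thesis
  proof (cases "isbr y")
    case True
    then have "isbr x" "isbr z" "min (bn x) (cmp x + 1) = min (bn z) (cmp z + 1)" using xy zy unfolding Rel_def by auto
    then have "Rel F x z \<or> Rel F z x \<or> x = z" using lin by simp
    then show ?thesis using xy zy by blast
  next
    case False
    show ?thesis
    proof (cases "isbr x \<and> isbr z")
      case True
      obtain d where d: "plt d (pay y)" using plt_below by blast
      let ?w = "mk (cmp y) (yc y) d"
      have "Rel F ?w y" "Rel F x ?w" "Rel F z ?w" using False True d xy zy unfolding Rel_def by (auto simp: isbr_def bn_def)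
      then show ?thesis by blast
    next
      case F2: False
      show ?thesis
      proof (cases "isbr x = isbr z")
        case True
        then have "\<not> isbr x" "\<not> isbr z" using F2 by auto
        then have "Rel F x z \<or> Rel F z x \<or> x = z" using lin True by simp
        then show ?thesis using xy zy by blast
      next
        case False
        then have "(isbr x \<and> \<not> isbr z) \<or> (isbr z \<and> \<not> isbr x)" by auto
        then have "Rel F x z \<or> Rel F z x" using xy zy unfolding Rel_def by auto
        then show ?thesis using xy zy by blast
      qed
    qed
  qed
qed

lemma Rel_interpolable: "interpolable (Rel F)"
  unfolding interpolable_def transitive_rel_def
proof (intro conjI allI impI)
  show "\<And>x y z. Rel F x y \<Longrightarrow> Rel F y z \<Longrightarrow> Rel F x z" by (rule Rel_trans)
  show "\<And>y. \<exists>x. Rel F x y" by (rule Rel_below)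
  fix y x z assume xy: "Rel F x y" and zy: "Rel F z y"
  from Rel_ub[OF xy zy] obtain u where u: "Rel F u y" "Rel F x u \<or> x = u" "Rel F z u \<or> z = u" by blast
  from Rel_dense[OF u(1)] obtain w where w: "Rel F u w" "Rel F w y" by blast
  show "\<exists>w. Rel F w y \<and> Rel F x w \<and> Rel F z w"
    using u w Rel_trans by blast
qed

lemma Rel_irreflexive: "irreflexive_rel (Rel F)"
  unfolding irreflexive_rel_def using Rel_irrefl by blast

section \<open>Block isomorphisms\<close>

fun cnt :: "(nat \<Rightarrow> bool) \<Rightarrow> nat \<Rightarrow> nat" where
  "cnt \<phi> 0 = 0"
| "cnt \<phi> (Suc s) = cnt \<phi> s + (if \<phi> s then 1 else 0)"

lemma cnt_mono: "s \<le> t \<Longrightarrow> cnt \<phi> s \<le> cnt \<phi> t"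
  by (induction t) (auto simp: le_Suc_eq)

lemma cnt_strict: "s < t \<Longrightarrow> \<phi> s \<Longrightarrow> cnt \<phi> s < cnt \<phi> t"
proof -
  assume "s < t" "\<phi> s"
  then have "cnt \<phi> s < cnt \<phi> (Suc s)" by simp
  also have "\<dots> \<le> cnt \<phi> t" using \<open>s < t\<close> by (intro cnt_mono) simp
  finally show ?thesis .
qed

lemma cnt_surj: "k < cnt \<phi> s \<Longrightarrow> \<exists>s'<s. \<phi> s' \<and> cnt \<phi> s' = k"
proof (induction s)
  case 0 then show ?case by simp
next
  case (Suc s)
  show ?case
  proof (cases "k < cnt \<phi> s")
    case True then show ?thesis using Suc.IH by (meson less_Suc_eq)
  next
    case False
    then have "\<phi> s" "cnt \<phi> s = k" using Suc.prems by (auto split: if_splits)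
    then show ?thesis by blast
  qed
qed

lemma cnt_const: "(\<forall>s\<ge>s0. \<not> \<phi> s) \<Longrightarrow> cnt \<phi> (s0 + k) = cnt \<phi> s0"
  by (induction k) auto

lemma cnt_grow: "(\<forall>s\<ge>s0. \<phi> s) \<Longrightarrow> cnt \<phi> (s0 + k) = cnt \<phi> s0 + k"
  by (induction k) auto

definition off :: "(nat \<Rightarrow> bool) \<Rightarrow> nat \<Rightarrow> int" where
  "off \<phi> x = (if x = 0 then 0 else if \<phi> (x - 1) then 1 + int (cnt \<phi> (x - 1))
               else - 1 - int (cnt (\<lambda>s. \<not> \<phi> s) (x - 1)))"

lemma cnt_less_iff: "\<phi> a \<Longrightarrow> \<phi> b \<Longrightarrow> cnt \<phi> a < cnt \<phi> b \<longleftrightarrow> a < b"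
  by (meson cnt_mono cnt_strict not_le)

lemma BL_off: "BL \<phi> x1 x2 \<longleftrightarrow> off \<phi> x1 < off \<phi> x2"
proof -
  have A: "\<phi> a \<Longrightarrow> \<phi> b \<Longrightarrow> cnt \<phi> a < cnt \<phi> b \<longleftrightarrow> a < b" for a b by (rule cnt_less_iff)
  have B: "\<not> \<phi> a \<Longrightarrow> \<not> \<phi> b \<Longrightarrow> cnt (\<lambda>s. \<not> \<phi> s) a < cnt (\<lambda>s. \<not> \<phi> s) b \<longleftrightarrow> a < b" for a b
    by (rule cnt_less_iff)
  show ?thesis
  proof (cases "x1 = 0"; cases "x2 = 0")
    assume "x1 = 0" "x2 = 0" then show ?thesis unfolding BL_def cls_def off_def by simp
  next
    assume "x1 = 0" "x2 \<noteq> 0" then show ?thesis unfolding BL_def cls_def off_def by simp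
  next
    assume "x1 \<noteq> 0" "x2 = 0" then show ?thesis unfolding BL_def cls_def off_def by simp
  next
    assume h: "x1 \<noteq> 0" "x2 \<noteq> 0"
    then obtain s1 s2 where s: "x1 = Suc s1" "x2 = Suc s2" by (metis not0_implies_Suc)
    show ?thesis
    proof (cases "\<phi> s1"; cases "\<phi> s2")
      assume "\<phi> s1" "\<phi> s2" then show ?thesis unfolding BL_def cls_def off_def using s A[of s1 s2] by simp
    next
      assume "\<phi> s1" "\<not> \<phi> s2" then show ?thesis unfolding BL_def cls_def off_def using s by simp
    next
      assume "\<not> \<phi> s1" "\<phi> s2" then show ?thesis unfolding BL_def cls_def off_def using s by simp
    next
      assume "\<not> \<phi> s1" "\<not> \<phi> s2" then show ?thesis unfolding BL_def cls_def off_def using s B[of s2 s1] by simp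
    qed
  qed
qed

lemma off_inj: "off \<phi> x1 = off \<phi> x2 \<Longrightarrow> x1 = x2"
  using BL_linear BL_off by (metis less_irrefl)

lemma range_false:
  assumes ev: "\<forall>s\<ge>s0. \<not> \<phi> s"
  shows "range (off \<phi>) = {m. m \<le> int (cnt \<phi> s0)}"
proof
  show "range (off \<phi>) \<subseteq> {m. m \<le> int (cnt \<phi> s0)}"
  proof
    fix m assume "m \<in> range (off \<phi>)"
    then obtain x where m: "m = off \<phi> x" by blast
    show "m \<in> {m. m \<le> int (cnt \<phi> s0)}"
    proof (cases "x \<noteq> 0 \<and> \<phi> (x - 1)")
      case True
      then have "x - 1 < s0" using ev by (meson not_le)
      then have "cnt \<phi> (x - 1) < cnt \<phi> s0" using True cnt_strict by blast
      then show ?thesis using m True unfolding off_def by simp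
    next
      case False then show ?thesis using m unfolding off_def by auto
    qed
  qed
next
  show "{m. m \<le> int (cnt \<phi> s0)} \<subseteq> range (off \<phi>)"
  proof
    fix m assume m: "m \<in> {m. m \<le> int (cnt \<phi> s0)}"
    consider "m = 0" | "m > 0" | "m < 0" by linarith
    then show "m \<in> range (off \<phi>)"
    proof cases
      case 1 then show ?thesis by (intro range_eqI[of _ _ 0]) (simp add: off_def)
    next
      case 2
      then have "nat (m - 1) < cnt \<phi> s0" using m by simp
      from cnt_surj[OF this] obtain s' where s': "\<phi> s'" "cnt \<phi> s' = nat (m - 1)" by blast
      have "off \<phi> (Suc s') = m" using s' 2 unfolding off_def by simp
      then show ?thesis by (metis rangeI)
    next
      case 3
      define k where "k = nat (- m - 1)"
      have ev': "\<forall>s\<ge>s0. (\<lambda>s. \<not> \<phi> s) s" using ev by simp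
      have "k < cnt (\<lambda>s. \<not> \<phi> s) (s0 + Suc k)" using cnt_grow[OF ev', of "Suc k"] by simp
      from cnt_surj[OF this] obtain s' where s': "\<not> \<phi> s'" "cnt (\<lambda>s. \<not> \<phi> s) s' = k" by blast
      have "off \<phi> (Suc s') = m" using s' 3 unfolding off_def k_def by simp
      then show ?thesis by (metis rangeI)
    qed
  qed
qed

lemma range_true:
  assumes ev: "\<forall>s\<ge>s0. \<phi> s"
  shows "range (off \<phi>) = {m. - int (cnt (\<lambda>s. \<not> \<phi> s) s0) \<le> m}"
proof
  show "range (off \<phi>) \<subseteq> {m. - int (cnt (\<lambda>s. \<not> \<phi> s) s0) \<le> m}"
  proof
    fix m assume "m \<in> range (off \<phi>)"
    then obtain x where m: "m = off \<phi> x" by blast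
    show "m \<in> {m. - int (cnt (\<lambda>s. \<not> \<phi> s) s0) \<le> m}"
    proof (cases "x \<noteq> 0 \<and> \<not> \<phi> (x - 1)")
      case True
      then have "x - 1 < s0" using ev by (meson not_le)
      then have "cnt (\<lambda>s. \<not> \<phi> s) (x - 1) < cnt (\<lambda>s. \<not> \<phi> s) s0" using True cnt_strict[of "x - 1" s0 "\<lambda>s. \<not> \<phi> s"] by blast
      then show ?thesis using m True unfolding off_def by simp
    next
      case False then show ?thesis using m unfolding off_def by auto
    qed
  qed
next
  show "{m. - int (cnt (\<lambda>s. \<not> \<phi> s) s0) \<le> m} \<subseteq> range (off \<phi>)"
  proof
    fix m assume m: "m \<in> {m. - int (cnt (\<lambda>s. \<not> \<phi> s) s0) \<le> m}"
    consider "m = 0" | "m > 0" | "m < 0" by linarith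
    then show "m \<in> range (off \<phi>)"
    proof cases
      case 1 then show ?thesis by (intro range_eqI[of _ _ 0]) (simp add: off_def)
    next
      case 3
      then have "nat (- m - 1) < cnt (\<lambda>s. \<not> \<phi> s) s0" using m by simp
      from cnt_surj[OF this] obtain s' where s': "\<not> \<phi> s'" "cnt (\<lambda>s. \<not> \<phi> s) s' = nat (- m - 1)" by blast
      have "off \<phi> (Suc s') = m" using s' 3 unfolding off_def by simp
      then show ?thesis by (metis rangeI)
    next
      case 2
      define k where "k = nat (m - 1)"
      have "k < cnt \<phi> (s0 + Suc k)" using cnt_grow[OF ev, of "Suc k"] by simp
      from cnt_surj[OF this] obtain s' where s': "\<phi> s'" "cnt \<phi> s' = k" by blast
      have "off \<phi> (Suc s') = m" using s' 2 unfolding off_def k_def by simp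
      then show ?thesis by (metis rangeI)
    qed
  qed
qed

lemma shift_iso:
  assumes sh: "\<And>m. m \<in> range (off \<phi>) \<longleftrightarrow> m + t \<in> range (off \<psi>)"
  shows "\<exists>\<beta>. bij \<beta> \<and> (\<forall>x1 x2. BL \<phi> x1 x2 \<longleftrightarrow> BL \<psi> (\<beta> x1) (\<beta> x2))"
proof -
  define \<beta> where "\<beta> x = (SOME y. off \<psi> y = off \<phi> x + t)" for x
  have b: "off \<psi> (\<beta> x) = off \<phi> x + t" for x
  proof -
    have "off \<phi> x + t \<in> range (off \<psi>)" using sh by blast
    then have "\<exists>y. off \<psi> y = off \<phi> x + t" by auto
    then show ?thesis unfolding \<beta>_def by (rule someI_ex)
  qed
  have "inj \<beta>"
  proof (rule injI)
    fix x y assume "\<beta> x = \<beta> y"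
    then have "off \<phi> x = off \<phi> y" using b by (metis add_right_cancel)
    then show "x = y" by (rule off_inj)
  qed
  moreover have "surj \<beta>"
  proof -
    have ex: "\<exists>x. \<beta> x = y" for y
    proof -
      have "(off \<psi> y - t) + t \<in> range (off \<psi>)" by simp
      then have "off \<psi> y - t \<in> range (off \<phi>)" using sh by blast
      then obtain x where x: "off \<phi> x = off \<psi> y - t" by auto
      then have "off \<psi> (\<beta> x) = off \<psi> y" using b by simp
      then have "\<beta> x = y" by (rule off_inj)
      then show ?thesis by blast
    qed
    show ?thesis unfolding surj_def
    proof
      fix y show "\<exists>x. y = \<beta> x" using ex[of y] by (metis)
    qed
  qed
  ultimately have "bij \<beta>" by (rule bijI)
  moreover have "BL \<phi> x1 x2 \<longleftrightarrow> BL \<psi> (\<beta> x1) (\<beta> x2)" for x1 x2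
    unfolding BL_off b by simp
  ultimately show ?thesis by blast
qed

lemma block_iso:
  assumes ev: "\<exists>s0. \<forall>s\<ge>s0. \<phi> s = b"
  shows "\<exists>\<beta>. bij \<beta> \<and> (\<forall>x1 x2. BL \<phi> x1 x2 \<longleftrightarrow> BL (\<lambda>s. b) (\<beta> x1) (\<beta> x2))"
proof -
  from ev obtain s0 where s0: "\<forall>s\<ge>s0. \<phi> s = b" by blast
  show ?thesis
  proof (cases b)
    case False
    then have bF: "(\<lambda>s::nat. b) = (\<lambda>s. False)" by simp
    have r1: "range (off \<phi>) = {m. m \<le> int (cnt \<phi> s0)}" by (rule range_false) (use s0 False in auto)
    have r2: "range (off (\<lambda>s::nat. False)) = {m. m \<le> int (cnt (\<lambda>s. False) 0)}" by (rule range_false) auto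
    have sh: "m \<in> range (off \<phi>) \<longleftrightarrow> m + (- int (cnt \<phi> s0)) \<in> range (off (\<lambda>s::nat. False))" for m
      unfolding r1 r2 by simp
    show ?thesis unfolding bF by (rule shift_iso[OF sh])
  next
    case True
    then have bT: "(\<lambda>s::nat. b) = (\<lambda>s. True)" by simp
    have r1: "range (off \<phi>) = {m. - int (cnt (\<lambda>s. \<not> \<phi> s) s0) \<le> m}" by (rule range_true) (use s0 True in auto)
    have r2: "range (off (\<lambda>s::nat. True)) = {m. - int (cnt (\<lambda>s. \<not> True) 0) \<le> m}" by (rule range_true) auto
    have sh: "m \<in> range (off \<phi>) \<longleftrightarrow> m + int (cnt (\<lambda>s. \<not> \<phi> s) s0) \<in> range (off (\<lambda>s::nat. True))" for m
      unfolding r1 r2 by simp arith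
    show ?thesis unfolding bT by (rule shift_iso[OF sh])
  qed
qed


lemma yc_main: "\<not> isbr i \<Longrightarrow> yc i = 2 * bn i"
  unfolding isbr_def bn_def by simp

lemma Rel_iso:
  assumes ev: "\<And>c. \<exists>s0. \<forall>s\<ge>s0. F c s = G c"
  shows "rel_isomorphic (Rel F) (Rel (\<lambda>c s. G c))"
proof -
  have "\<forall>c. \<exists>\<beta>. bij \<beta> \<and> (\<forall>x1 x2. BL (F c) x1 x2 \<longleftrightarrow> BL (\<lambda>s. G c) (\<beta> x1) (\<beta> x2))"
    by (intro allI block_iso[OF ev])
  then have "\<exists>B. \<forall>c. bij (B c) \<and> (\<forall>x1 x2. BL (F c) x1 x2 \<longleftrightarrow> BL (\<lambda>s. G c) (B c x1) (B c x2))"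
    by (rule choice)
  then obtain B where B0: "\<forall>c. bij (B c) \<and> (\<forall>x1 x2. BL (F c) x1 x2 \<longleftrightarrow> BL (\<lambda>s. G c) (B c x1) (B c x2))"
    by blast
  have B: "\<And>c. bij (B c)" "\<And>c x1 x2. BL (F c) x1 x2 \<longleftrightarrow> BL (\<lambda>s. G c) (B c x1) (B c x2)"
    using B0 by auto
  define f where "f i = (if isbr i then i else mk (cmp i) (2 * B (cmp i) (bn i)) (pay i))" for i
  have fc: "cmp (f i) = cmp i" for i unfolding f_def by simp
  have fb: "isbr (f i) = isbr i" for i unfolding f_def by (simp add: isbr_mk)
  have fp: "pay (f i) = pay i" for i unfolding f_def by simp
  have fn1: "isbr i \<Longrightarrow> bn (f i) = bn i" for i unfolding f_def by simp
  have fn2: "\<not> isbr i \<Longrightarrow> bn (f i) = B (cmp i) (bn i)" for i unfolding f_def by (simp add: bn_mk)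
  have injB: "B c x = B c y \<longleftrightarrow> x = y" for c x y using bij_is_inj[OF B(1)[of c]] by (simp add: inj_eq)
  have "inj f"
  proof (rule injI)
    fix i j assume e: "f i = f j"
    have "cmp i = cmp j" using e fc by metis
    moreover have "isbr i = isbr j" using e fb by metis
    moreover have "pay i = pay j" using e fp by metis
    moreover note e
    ultimately have h: "cmp i = cmp j" "isbr i = isbr j" "pay i = pay j" "f i = f j" by auto
    have "bn i = bn j"
    proof (cases "isbr i")
      case True
      then have "bn (f i) = bn i" "bn (f j) = bn j" using h(2) fn1 by auto
      then show ?thesis using h(4) by simp
    next
      case False
      then have "bn (f i) = B (cmp i) (bn i)" "bn (f j) = B (cmp i) (bn j)" using h(1,2) fn2 by auto
      then show ?thesis using h(4) injB by simp
    qed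
    then show "i = j" using same_elem h by blast
  qed
  moreover have "surj f"
    unfolding surj_def
  proof
    fix k
    show "\<exists>i. k = f i"
    proof (cases "isbr k")
      case True then show ?thesis unfolding f_def by (intro exI[of _ k]) simp
    next
      case False
      obtain x where x: "B (cmp k) x = bn k" using B(1) by (metis bij_pointE)
      let ?i = "mk (cmp k) (2 * x) (pay k)"
      have "\<not> isbr ?i" by (simp add: isbr_mk)
      then have "f ?i = mk (cmp k) (2 * bn k) (pay k)" unfolding f_def using x by (simp add: bn_mk)
      also have "\<dots> = k" using yc_main[OF False] mk_eta by metis
      finally show ?thesis by metis
    qed
  qed
  ultimately have "bij f" by (rule bijI)
  moreover have "Rel F i j \<longleftrightarrow> Rel (\<lambda>c s. G c) (f i) (f j)" for i j
  proof (cases "isbr i"; cases "isbr j")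
    assume "isbr i" "isbr j" then show ?thesis unfolding Rel_def using fc fb fp fn1 by simp
  next
    assume "isbr i" "\<not> isbr j" then show ?thesis unfolding Rel_def using fc fb by simp
  next
    assume "\<not> isbr i" "isbr j" then show ?thesis unfolding Rel_def using fc fb by simp
  next
    assume h: "\<not> isbr i" "\<not> isbr j"
    show ?thesis
    proof (cases "cmp i = cmp j")
      case True
      then show ?thesis unfolding Rel_def using h fc fb fp fn2 B(2) injB by simp
    next
      case False then show ?thesis unfolding Rel_def using fc by simp
    qed
  qed
  ultimately show ?thesis unfolding rel_isomorphic_def by blast
qed

section \<open>Sigma-2 characterisation\<close>

definition AC :: "(nat \<Rightarrow> nat \<Rightarrow> bool) \<Rightarrow> nat \<Rightarrow> nat list \<Rightarrow> bool" where
  "AC R t as \<longleftrightarrow> distinct as \<and> (\<forall>a\<in>set as. R a t) \<and> (\<forall>a\<in>set as. \<forall>b\<in>set as. \<not> R a b)"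

definition LM :: "(nat \<Rightarrow> nat \<Rightarrow> bool) \<Rightarrow> nat \<Rightarrow> nat \<Rightarrow> bool" where
  "LM R L t \<longleftrightarrow> (\<forall>u. \<not> R t u) \<and> (\<exists>as. AC R t as \<and> length as = L + 2) \<and> \<not> (\<exists>as. AC R t as \<and> length as = L + 3)"

lemma LM_iso:
  assumes f: "bij f" and r: "\<And>x y. Q x y \<longleftrightarrow> R (f x) (f y)"
  shows "(\<exists>t. LM Q L t) \<longleftrightarrow> (\<exists>t. LM R L t)"
proof -
  have inj: "inj f" using f bij_is_inj by blast
  have sj: "surj f" using f bij_is_surj by blast
  have fi: "f (inv f y) = y" for y using sj by (simp add: surj_f_inv_f)
  have AC1: "AC Q t as \<longleftrightarrow> AC R (f t) (map f as)" for t as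
    unfolding AC_def using r inj by (auto simp: distinct_map inj_on_def)
  have ACex: "(\<exists>as. AC Q t as \<and> length as = k) \<longleftrightarrow> (\<exists>bs. AC R (f t) bs \<and> length bs = k)" for t k
  proof
    assume "\<exists>as. AC Q t as \<and> length as = k"
    then show "\<exists>bs. AC R (f t) bs \<and> length bs = k" using AC1 by (metis length_map)
  next
    assume "\<exists>bs. AC R (f t) bs \<and> length bs = k"
    then obtain bs where bs: "AC R (f t) bs" "length bs = k" by blast
    have "map f (map (inv f) bs) = bs" by (simp add: fi map_idI)
    then show "\<exists>as. AC Q t as \<and> length as = k" using bs AC1[of t "map (inv f) bs"]
      by (intro exI[of _ "map (inv f) bs"]) simp
  qed
  have max: "(\<forall>u. \<not> Q t u) \<longleftrightarrow> (\<forall>u. \<not> R (f t) u)" for t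
    using r fi by metis
  have "LM Q L t \<longleftrightarrow> LM R L (f t)" for t unfolding LM_def using ACex max by simp
  then show ?thesis using fi by metis
qed

lemma width_lower:
  assumes t: "\<not> isbr t" and k: "k \<le> cmp t + 2"
  shows "\<exists>as. AC (Rel F) t as \<and> length as = k"
proof -
  define as where "as = map (\<lambda>b. mk (cmp t) (2 * b + 1) 0) [0..<k]"
  have d: "distinct as" unfolding as_def by (simp add: distinct_map inj_on_def mk_def)
  have below: "\<forall>a\<in>set as. Rel F a t" unfolding as_def Rel_def using t by (auto simp: isbr_mk)
  have inc: "\<forall>a\<in>set as. \<forall>b\<in>set as. \<not> Rel F a b"
  proof (intro ballI)
    fix a b assume "a \<in> set as" "b \<in> set as"
    then obtain x y where xy: "x < k" "y < k" "a = mk (cmp t) (2 * x + 1) 0" "b = mk (cmp t) (2 * y + 1) 0"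
      unfolding as_def by auto
    have "min x (cmp t + 1) = x" "min y (cmp t + 1) = y" using xy k by auto
    then show "\<not> Rel F a b" using xy unfolding Rel_def by (auto simp: isbr_mk bn_mk not_plt_0)
  qed
  show ?thesis using d below inc unfolding AC_def as_def by (intro exI[of _ as]) (simp add: as_def)
qed

lemma width_upper:
  assumes t: "\<not> isbr t" and ac: "AC (Rel F) t as"
  shows "length as \<le> cmp t + 2"
proof (cases "\<exists>a\<in>set as. \<not> isbr a")
  case True
  then obtain a where a: "a \<in> set as" "\<not> isbr a" by blast
  have "\<forall>b\<in>set as. b = a"
  proof
    fix b assume b: "b \<in> set as"
    have cab: "cmp a = cmp b" using a(1) b ac unfolding AC_def Rel_def by metis
    show "b = a"
    proof (rule ccontr)
      assume "b \<noteq> a"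
      moreover have "\<not> Rel F a b" "\<not> Rel F b a" using a(1) b ac unfolding AC_def by auto
      ultimately show False
      proof (cases "isbr b")
        case True then show False using \<open>\<not> Rel F b a\<close> a(2) cab unfolding Rel_def by auto
      next
        case False then show False using Rel_linear_main[OF cab a(2) False] \<open>b \<noteq> a\<close> \<open>\<not> Rel F a b\<close> \<open>\<not> Rel F b a\<close> by metis
      qed
    qed
  qed
  then have "set as \<subseteq> {a}" by blast
  then have "card (set as) \<le> card {a}" by (intro card_mono) auto
  then have "card (set as) \<le> 1" by simp
  then show ?thesis using ac unfolding AC_def by (simp add: distinct_card)
next
  case False
  then have br: "\<forall>a\<in>set as. isbr a" by blast
  have ct: "\<forall>a\<in>set as. cmp a = cmp t" using ac unfolding AC_def Rel_def by auto
  define g where "g a = min (bn a) (cmp t + 1)" for a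
  have "inj_on g (set as)"
  proof (rule inj_onI)
    fix a b assume ab: "a \<in> set as" "b \<in> set as" "g a = g b"
    show "a = b"
    proof (rule ccontr)
      assume "a \<noteq> b"
      have "Rel F a b \<or> Rel F b a"
        by (rule Rel_linear_br) (use ab br ct \<open>a \<noteq> b\<close> in \<open>auto simp: g_def\<close>)
      then show False using ab ac unfolding AC_def by auto
    qed
  qed
  moreover have "g ` set as \<subseteq> {..cmp t + 1}" unfolding g_def by auto
  ultimately have "card (set as) \<le> card {..cmp t + 1}" by (metis card_image card_mono finite_atMost)
  then show ?thesis using ac unfolding AC_def by (simp add: distinct_card)
qed

lemma LM_char:
  assumes const: "\<And>c s. F c s = F c 0"
  shows "(\<exists>t. LM (Rel F) L t) \<longleftrightarrow> \<not> F L 0"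
proof
  assume "\<exists>t. LM (Rel F) L t"
  then obtain t where lm: "LM (Rel F) L t" by blast
  then have mx: "\<forall>u. \<not> Rel F t u" unfolding LM_def by blast
  have tm: "\<not> isbr t"
  proof
    assume "isbr t"
    then have "Rel F t (mk (cmp t) 0 0)" unfolding Rel_def by (simp add: isbr_mk)
    then show False using mx by blast
  qed
  have fl: "\<not> F (cmp t) 0"
  proof
    assume fc: "F (cmp t) 0"
    let ?u = "mk (cmp t) (2 * (bn t + 1)) 0"
    have "F (cmp t) (bn t)" using fc const[of "cmp t" "bn t"] by simp
    then have "cls (F (cmp t)) (bn t + 1) = 2" unfolding cls_def by simp
    moreover have "cls (F (cmp t)) (bn t) \<ge> 1" using fc const[of "cmp t" "bn t - 1"] unfolding cls_def by simp
    moreover have "cls (F (cmp t)) (bn t) \<le> 2" unfolding cls_def by simp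
    ultimately have "BL (F (cmp t)) (bn t) (bn t + 1)" unfolding BL_def by auto
    then have "Rel F t ?u" using tm unfolding Rel_def by (simp add: isbr_mk bn_mk)
    then show False using mx by blast
  qed
  from lm obtain as where as: "AC (Rel F) t as" "length as = L + 2" unfolding LM_def by blast
  have "L + 2 \<le> cmp t + 2" using width_upper[OF tm as(1)] as(2) by simp
  moreover have "\<not> L + 3 \<le> cmp t + 2"
  proof
    assume "L + 3 \<le> cmp t + 2"
    then obtain bs where "AC (Rel F) t bs" "length bs = L + 3" using width_lower[OF tm] by blast
    then show False using lm unfolding LM_def by blast
  qed
  ultimately have "L = cmp t" by simp
  then show "\<not> F L 0" using fl by simp
next
  assume nf: "\<not> F L 0"
  let ?t = "mk L 0 0"
  have tm: "\<not> isbr ?t" by (simp add: isbr_mk)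
  have mx: "\<forall>u. \<not> Rel F ?t u"
  proof
    fix u
    have "\<not> F L (bn u - 1)" using nf const[of L "bn u - 1"] by simp
    then have "cls (F L) (bn u) \<le> 1" unfolding cls_def by simp
    moreover have "cls (F L) 0 = 1" unfolding cls_def by simp
    ultimately have "\<not> BL (F L) 0 (bn u)" unfolding BL_def by auto
    then show "\<not> Rel F ?t u" unfolding Rel_def by (auto simp: isbr_mk bn_mk not_plt_0)
  qed
  have "\<exists>as. AC (Rel F) ?t as \<and> length as = L + 2" using width_lower[OF tm] by simp
  moreover have "\<not> (\<exists>as. AC (Rel F) ?t as \<and> length as = L + 3)" using width_upper[OF tm] by fastforce
  ultimately have "LM (Rel F) L ?t" using mx unfolding LM_def by blast
  then show "\<exists>t. LM (Rel F) L t" by blast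
qed

lemma odd_mod: "odd (n::nat) \<longleftrightarrow> n mod 2 = 1" by presburger

lemma cp_Rel:
  assumes Fc: "cp X (\<lambda>z. F (fst (prod_decode z)) (snd (prod_decode z)))"
    and fi: "cf X fi" and fj: "cf X fj"
  shows "cp X (\<lambda>x. Rel F (fi x) (fj x))"
proof -
  have Fr: "cf X a \<Longrightarrow> cf X b \<Longrightarrow> cp X (\<lambda>x. F (a x) (b x))" for a b
    by (rule cp_app2[OF Fc])
  have mn: "min a (b::nat) = (if a \<le> b then a else b)" for a b by simp
  show ?thesis
    unfolding Rel_def BL_def cls_def plt_def isbr_def bn_def cmp_def yc_def pay_def pnum_def pm_def pe_def odd_mod mn
    by (intro cfB cf_div2 cf_mod2 Fr fi fj cf_pred)
qed


lemma AC_num: "AC Q t (list_decode c) \<longleftrightarrow>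
   (\<forall>i<c. \<forall>j<c. (ntl ^^ i) c \<noteq> 0 \<longrightarrow> (ntl ^^ j) c \<noteq> 0 \<longrightarrow> (i \<noteq> j \<longrightarrow> el c i \<noteq> el c j) \<and> \<not> Q (el c i) (el c j))
   \<and> (\<forall>i<c. (ntl ^^ i) c \<noteq> 0 \<longrightarrow> Q (el c i) t)"
proof -
  let ?L = "list_decode c"
  have len: "length ?L \<le> c" using list_decode_bound by blast
  have li: "i < length ?L \<longleftrightarrow> i < c \<and> (ntl ^^ i) c \<noteq> 0" for i using len len_iff by (meson less_le_trans)
  have "distinct ?L \<longleftrightarrow> (\<forall>i<length ?L. \<forall>j<length ?L. i \<noteq> j \<longrightarrow> ?L ! i \<noteq> ?L ! j)"
    by (rule distinct_conv_nth)
  also have "\<dots> \<longleftrightarrow> (\<forall>i<c. \<forall>j<c. (ntl ^^ i) c \<noteq> 0 \<longrightarrow> (ntl ^^ j) c \<noteq> 0 \<longrightarrow> i \<noteq> j \<longrightarrow> el c i \<noteq> el c j)"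
    using li nth_el by metis
  finally have D: "distinct ?L \<longleftrightarrow> (\<forall>i<c. \<forall>j<c. (ntl ^^ i) c \<noteq> 0 \<longrightarrow> (ntl ^^ j) c \<noteq> 0 \<longrightarrow> i \<noteq> j \<longrightarrow> el c i \<noteq> el c j)" .
  have "(\<forall>a\<in>set ?L. \<forall>b\<in>set ?L. \<not> Q a b) \<longleftrightarrow> (\<forall>i<length ?L. \<forall>j<length ?L. \<not> Q (?L ! i) (?L ! j))"
    by (metis in_set_conv_nth)
  also have "\<dots> \<longleftrightarrow> (\<forall>i<c. \<forall>j<c. (ntl ^^ i) c \<noteq> 0 \<longrightarrow> (ntl ^^ j) c \<noteq> 0 \<longrightarrow> \<not> Q (el c i) (el c j))"
    using li nth_el by metis
  finally have I: "(\<forall>a\<in>set ?L. \<forall>b\<in>set ?L. \<not> Q a b) \<longleftrightarrow> (\<forall>i<c. \<forall>j<c. (ntl ^^ i) c \<noteq> 0 \<longrightarrow> (ntl ^^ j) c \<noteq> 0 \<longrightarrow> \<not> Q (el c i) (el c j))" .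
  have "(\<forall>a\<in>set ?L. Q a t) \<longleftrightarrow> (\<forall>i<length ?L. Q (?L ! i) t)" by (metis in_set_conv_nth)
  also have "\<dots> \<longleftrightarrow> (\<forall>i<c. (ntl ^^ i) c \<noteq> 0 \<longrightarrow> Q (el c i) t)" using li nth_el by metis
  finally have B: "(\<forall>a\<in>set ?L. Q a t) \<longleftrightarrow> (\<forall>i<c. (ntl ^^ i) c \<noteq> 0 \<longrightarrow> Q (el c i) t)" .
  show ?thesis unfolding AC_def D I B by blast
qed

lemma len_num: "length (list_decode c) = k \<longleftrightarrow> (k = 0 \<or> (ntl ^^ (k - 1)) c \<noteq> 0) \<and> (ntl ^^ k) c = 0"
proof -
  have "length (list_decode c) = k \<longleftrightarrow> (k = 0 \<or> k - 1 < length (list_decode c)) \<and> \<not> k < length (list_decode c)"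
    by arith
  then show ?thesis using len_iff by metis
qed

definition PP :: "(nat \<Rightarrow> nat \<Rightarrow> bool) \<Rightarrow> nat \<Rightarrow> nat \<Rightarrow> nat \<Rightarrow> bool" where
  "PP Q L x y \<longleftrightarrow> \<not> Q (fst (prod_decode x)) (fst (prod_decode y))
     \<and> AC Q (fst (prod_decode x)) (list_decode (snd (prod_decode x))) \<and> length (list_decode (snd (prod_decode x))) = L + 2
     \<and> \<not> (AC Q (fst (prod_decode x)) (list_decode (snd (prod_decode y))) \<and> length (list_decode (snd (prod_decode y))) = L + 3)"

lemma PP_iff: "(\<exists>x. \<forall>y. PP Q L x y) \<longleftrightarrow> (\<exists>t. LM Q L t)"
proof
  assume "\<exists>x. \<forall>y. PP Q L x y"
  then obtain x where x: "\<forall>y. PP Q L x y" by blast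
  let ?t = "fst (prod_decode x)"
  have "\<forall>u. \<not> Q ?t u" using x unfolding PP_def by (metis fst_conv prod_encode_inverse)
  moreover have "\<exists>as. AC Q ?t as \<and> length as = L + 2" using x[rule_format, of 0] unfolding PP_def by blast
  moreover have "\<not> (\<exists>as. AC Q ?t as \<and> length as = L + 3)"
  proof
    assume "\<exists>as. AC Q ?t as \<and> length as = L + 3"
    then obtain as where "AC Q ?t as" "length as = L + 3" by blast
    then show False using x[rule_format, of "prod_encode (0, list_encode as)"] unfolding PP_def by simp
  qed
  ultimately show "\<exists>t. LM Q L t" unfolding LM_def by blast
next
  assume "\<exists>t. LM Q L t"
  then obtain t as where t: "\<forall>u. \<not> Q t u" "AC Q t as" "length as = L + 2" "\<not> (\<exists>as. AC Q t as \<and> length as = L + 3)"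
    unfolding LM_def by blast
  have "\<forall>y. PP Q L (prod_encode (t, list_encode as)) y" unfolding PP_def using t by simp
  then show "\<exists>x. \<forall>y. PP Q L x y" by blast
qed

lemma cp_PP:
  assumes Qc: "cp X (\<lambda>z. Q (fst (prod_decode z)) (snd (prod_decode z)))"
    and fL: "cf X fL" and fx: "cf X fx" and fy: "cf X fy"
  shows "cp X (\<lambda>z. PP Q (fL z) (fx z) (fy z))"
proof -
  have Qr: "cf X a \<Longrightarrow> cf X b \<Longrightarrow> cp X (\<lambda>x. Q (a x) (b x))" for a b
    by (rule cp_app2[OF Qc])
  show ?thesis
    unfolding PP_def AC_num len_num
    by (intro cfC cf_funpow cf_ntl[OF cf_id] Qr fL fx fy cf_comp[OF fL] cf_comp[OF fx] cf_comp[OF fy])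
qed

definition FA :: "nat set \<Rightarrow> nat \<Rightarrow> nat \<Rightarrow> bool" where
  "FA A c s \<longleftrightarrow> (if even c then c div 2 \<notin> A else c div 2 \<in> A)"

theorem theorem30:
  fixes A :: "nat set"
  shows "\<exists>R :: nat \<Rightarrow> nat \<Rightarrow> bool. irreflexive_rel R \<and> interpolable R \<and>
           (\<forall>X :: nat set. turing_reducible A (jump X) \<longleftrightarrow>
              (\<exists>Q. rel_computable_in X Q \<and> rel_isomorphic Q R))"
proof (intro exI conjI allI)
  let ?R = "Rel (FA A)"
  show "irreflexive_rel ?R" by (rule Rel_irreflexive)
  show "interpolable ?R" by (rule Rel_interpolable)
  fix X :: "nat set"
  have const: "\<And>c s. FA A c s = FA A c 0" unfolding FA_def by simp
  have char: "(\<exists>t. LM ?R L t) \<longleftrightarrow> \<not> FA A L 0" for L by (rule LM_char[where F="FA A"]) (rule const)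
  show "turing_reducible A (jump X) \<longleftrightarrow> (\<exists>Q. rel_computable_in X Q \<and> rel_isomorphic Q ?R)"
  proof
    assume "turing_reducible A (jump X)"
    then obtain p where p: "\<And>n. eval (jump X) p n (if n \<in> A then 1 else 0)"
      unfolding turing_reducible_def by blast
    define FX where "FX c s = (if even c then Gapp X (code p) s (c div 2) \<noteq> 1 else Gapp X (code p) s (c div 2) = 1)" for c s
    have ev: "\<exists>s0. \<forall>s\<ge>s0. FX c s = FA A c 0" for c
    proof -
      from limit_lemma[OF p] obtain s0 where s0: "\<forall>s\<ge>s0. Gapp X (code p) s (c div 2) = (if c div 2 \<in> A then 1 else 0)"
        by blast
      show ?thesis using s0 unfolding FX_def FA_def by (intro exI[of _ s0]) auto
    qed
    have iso: "rel_isomorphic (Rel FX) (Rel (\<lambda>c s. FA A c 0))" by (rule Rel_iso[OF ev])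
    have "(\<lambda>c s. FA A c 0) = FA A" by (intro ext) (simp add: FA_def)
    then have iso': "rel_isomorphic (Rel FX) ?R" using iso by simp
    have Gc: "cf X a \<Longrightarrow> cf X b \<Longrightarrow> cf X (\<lambda>x. Gapp X (code p) (a x) (b x))" for a b
      by (rule cf_bin[OF cf_Gapp])
    have FXc: "cp X (\<lambda>z. FX (fst (prod_decode z)) (snd (prod_decode z)))"
      unfolding FX_def even_iff_mod_2_eq_zero by (intro cfB cp_if cf_div2 cf_mod2 Gc)
    have "cp X (\<lambda>z. Rel FX (fst (prod_decode z)) (snd (prod_decode z)))" by (intro cp_Rel[OF FXc] cfB)
    then obtain q where q: "\<And>z. eval X q z (if Rel FX (fst (prod_decode z)) (snd (prod_decode z)) then 1 else 0)"
      unfolding cp_def cf_def by blast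
    have "rel_computable_in X (Rel FX)" unfolding rel_computable_in_def
      using q[of "prod_encode (x, y)" for x y] by (intro exI[of _ q]) simp
    then show "\<exists>Q. rel_computable_in X Q \<and> rel_isomorphic Q ?R" using iso' by blast
  next
    assume "\<exists>Q. rel_computable_in X Q \<and> rel_isomorphic Q ?R"
    then obtain Q where Qc: "rel_computable_in X Q" and Qi: "rel_isomorphic Q ?R" by blast
    from Qc obtain q where q: "\<And>x y. eval X q (prod_encode (x, y)) (if Q x y then 1 else 0)"
      unfolding rel_computable_in_def by blast
    have cQ: "cp X (\<lambda>z. Q (fst (prod_decode z)) (snd (prod_decode z)))"
      unfolding cp_def cf_def using q by (metis prod.collapse prod_decode_inverse)
    from Qi obtain f where f: "bij f" "\<And>x y. Q x y \<longleftrightarrow> ?R (f x) (f y)" unfolding rel_isomorphic_def by blast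
    have inv: "(\<exists>t. LM Q L t) \<longleftrightarrow> \<not> FA A L 0" for L using LM_iso[where Q=Q and R="Rel (FA A)" and f=f, OF f] char by blast
    define P1 where "P1 a y = PP Q (2 * fst (prod_decode a)) (snd (prod_decode a)) y" for a y
    define P0 where "P0 a y = PP Q (2 * fst (prod_decode a) + 1) (snd (prod_decode a)) y" for a y
    show "turing_reducible A (jump X)"
    proof (rule post_delta2[of X P1 P0 A])
      show "cp X (\<lambda>z. P1 (fst (prod_decode z)) (snd (prod_decode z)))" unfolding P1_def
        by (intro cp_PP[OF cQ] cfB)
      show "cp X (\<lambda>z. P0 (fst (prod_decode z)) (snd (prod_decode z)))" unfolding P0_def
        by (intro cp_PP[OF cQ] cfB)
      fix n
      have "n \<in> A \<longleftrightarrow> \<not> FA A (2 * n) 0" unfolding FA_def by simp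
      also have "\<dots> \<longleftrightarrow> (\<exists>t. LM Q (2 * n) t)" using inv by simp
      also have "\<dots> \<longleftrightarrow> (\<exists>x. \<forall>y. PP Q (2 * n) x y)" using PP_iff by simp
      also have "\<dots> \<longleftrightarrow> (\<exists>x. \<forall>y. P1 (prod_encode (n, x)) y)" unfolding P1_def by simp
      finally show "n \<in> A \<longleftrightarrow> (\<exists>x. \<forall>y. P1 (prod_encode (n, x)) y)" .
      have "n \<notin> A \<longleftrightarrow> \<not> FA A (2 * n + 1) 0" unfolding FA_def by simp
      also have "\<dots> \<longleftrightarrow> (\<exists>t. LM Q (2 * n + 1) t)" using inv by simp
      also have "\<dots> \<longleftrightarrow> (\<exists>x. \<forall>y. PP Q (2 * n + 1) x y)" using PP_iff by simp
      also have "\<dots> \<longleftrightarrow> (\<exists>x. \<forall>y. P0 (prod_encode (n, x)) y)" unfolding P0_def by simp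
      finally show "n \<notin> A \<longleftrightarrow> (\<exists>x. \<forall>y. P0 (prod_encode (n, x)) y)" .
    qed
  qed
qed

end
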